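(* Let $k\subset L$ be a finite cyclic field extension, with $r:=[L:k]=\prod_{i=1}^mp_i^{\alpha_i}$ where the $p_i$ are distinct primes and $\alpha_i\geq 1$. Let $\mathbb D_r$ be the set of positive divisors of $r$ and $\mathcal A$ the set of atoms of $[k,L]$. Then: (1) For each $i\in\{1,\ldots,m\}$ there is a unique $A_i\in\mathcal A$ with $[A_i:k]=p_i$; and $T\in[k,L]$ lies in $\mathcal A$ if and only if $[T:k]=p_i$ for some $i$. (2) $\mathcal S[k,L]=\prod_{i=1}^mA_i$. (3) Let $\alpha:=\sup\{\alpha_i\}$ and let $\{S_j\}_{j=0}^n$ be the Loewy series of $k\subset L$. For $j\in\{0,\ldots,n\}$, $[S_j:k]=\prod_{i=1}^mp_i^{\beta_i}$ where $\beta_i=\alpha_i$ if $\alpha_i<j$ and $\beta_i=j$ if $\alpha_i\geq j$. Moreover, $T\in[k,L]$ is an atom of $[S_j,S_{j+1}]$ if and only if $[T:k]=\prod_{i=1}^mp_i^{\gamma_i}$ where there is an index $i_0$ with $\beta_{i_0}<\alpha_{i_0}$ such that $\gamma_{i_0}=\beta_{i_0}+1$ and $\gamma_i=\beta_i$ for $i\neq i_0$. In particular $\alpha=n$. (4) $S_j\subset S_{j+1}$ is Boolean for each $j\in\{0,\ldots,n-1\}$. (5) For $T\in[k,L]$ with $T\neq k$: $T$ is $\Pi$-irreducible in $[k,L]$ if and only if $[T:k]=p_i^{\beta}$ for some $i\in\{1,\ldots,m\}$ and some $\beta\in\{1,\ldots,\alpha_i\}$. (6) $|[k,L]|=\mathrm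 d([L:k])=\prod_{i=1}^m(\alpha_i+1)=|\mathbb D_r|$, where $\mathrm d$ is the number of divisors. If $\mathcal A_j$ denotes the set of atoms of $[S_j,S_{j+1}]$, then $\ell[k,L]=\sum_{j=0}^{\alpha-1}|\mathcal A_j|=\sum_{i=1}^m\alpha_i$, which is the number of $\Pi$-irreducible elements of $[k,L]$ different from $k$. (7) The following are equivalent: (a) $k\subset L$ is a $\mathcal P$-extension; (b) $k\subset L$ is either Boolean or a chain; (c) either $m=1$ or $\alpha=1$.
   Context: For a field extension $k\subseteq L$, $[k,L]$ is the lattice of intermediate fields (meet = intersection, join = compositum $TU$). $K\subset K'$ is minimal if $[K,K']=\{K,K'\}$; an atom of $[K,K'']$ is $K'$ with $K\subset K'$ minimal and $K'\subseteq K''$. The socle $\mathcal S[K,L]$ is the compositum of all atoms of $[K,L]$; the Loewy series of $k\subset L$ is $S_0=k$, $S_{j+1}=\mathcal S[S_j,L]$ while $S_j\neq L$, with $n$ least such that $S_n=L$. $\ell[k,L]$ is the supremum of lengths of chains in $[k,L]$. The extension $K\subseteq K'$ is Boolean if $[K,K']$ is a distributive lattice in which every element $V$ has a complement $V'$ ($V\cap V'=K$, $VV'=K'$). $k\subset L$ is a $\mathcal P$-extension if $[k,L]=\bigcup_{j=0}^{n-1}[S_j,S_{j+1}]$. An element $T\in[k,L]$ is $\Pi$-irreducible if $T=T_1T_2$ with $T_1,T_2\in[k,L]$ implies $T=T_1$ or $T=T_2$. *)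

theory Defs
  imports "HOL-Algebra.Algebra" "HOL-Computational_Algebra.Primes"
begin

definition interm :: "('a, 'b) ring_scheme \<Rightarrow> 'a set \<Rightarrow> 'a set \<Rightarrow> 'a set set" where
  "interm R K L = {T. subfield T R \<and> K \<subseteq> T \<and> T \<subseteq> L}"

definition compositum :: "('a, 'b) ring_scheme \<Rightarrow> 'a set \<Rightarrow> 'a set \<Rightarrow> 'a set" where
  "compositum R T U = generate_field R (T \<union> U)"

definition minimal_ext :: "('a, 'b) ring_scheme \<Rightarrow> 'a set \<Rightarrow> 'a set \<Rightarrow> bool" where
  "minimal_ext R K K' \<longleftrightarrow> K \<subset> K' \<and> interm R K K' = {K, K'}"

definition atoms :: "('a, 'b) ring_scheme \<Rightarrow> 'a set \<Rightarrow> 'a set \<Rightarrow> 'a set set" where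
  "atoms R K K'' = {K'. minimal_ext R K K' \<and> K' \<subseteq> K''}"

definition socle :: "('a, 'b) ring_scheme \<Rightarrow> 'a set \<Rightarrow> 'a set \<Rightarrow> 'a set" where
  "socle R K L = generate_field R (K \<union> \<Union> (atoms R K L))"

(* Loewy series S_0 = k, S_{j+1} = socle of [S_j, L]; once S_j = L it stays L *)
definition loewy :: "('a, 'b) ring_scheme \<Rightarrow> 'a set \<Rightarrow> 'a set \<Rightarrow> nat \<Rightarrow> 'a set" where
  "loewy R k L j = ((\<lambda>S. if S = L then L else socle R S L) ^^ j) k"

definition loewy_length :: "('a, 'b) ring_scheme \<Rightarrow> 'a set \<Rightarrow> 'a set \<Rightarrow> nat" where
  "loewy_length R k L = (LEAST n. loewy R k L n = L)"

definition lattice_length :: "('a, 'b) ring_scheme \<Rightarrow> 'a set \<Rightarrow> 'a set \<Rightarrow> nat" where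
  "lattice_length R k L = Sup {card C - 1 | C. C \<subseteq> interm R k L \<and> finite C \<and> C \<noteq> {} \<and>
       (\<forall>A\<in>C. \<forall>B\<in>C. A \<subseteq> B \<or> B \<subseteq> A)}"

definition is_boolean_ext :: "('a, 'b) ring_scheme \<Rightarrow> 'a set \<Rightarrow> 'a set \<Rightarrow> bool" where
  "is_boolean_ext R K K' \<longleftrightarrow>
     (\<forall>T\<in>interm R K K'. \<forall>U\<in>interm R K K'. \<forall>V\<in>interm R K K'.
        T \<inter> compositum R U V = compositum R (T \<inter> U) (T \<inter> V)) \<and>
     (\<forall>V\<in>interm R K K'. \<exists>V'\<in>interm R K K'. V \<inter> V' = K \<and> compositum R V V' = K')"

definition is_chain_ext :: "('a, 'b) ring_scheme \<Rightarrow> 'a set \<Rightarrow> 'a set \<Rightarrow> bool" where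
  "is_chain_ext R K L \<longleftrightarrow> (\<forall>A\<in>interm R K L. \<forall>B\<in>interm R K L. A \<subseteq> B \<or> B \<subseteq> A)"

definition is_P_ext :: "('a, 'b) ring_scheme \<Rightarrow> 'a set \<Rightarrow> 'a set \<Rightarrow> bool" where
  "is_P_ext R k L \<longleftrightarrow>
     interm R k L = (\<Union>j<loewy_length R k L. interm R (loewy R k L j) (loewy R k L (Suc j)))"

definition Pi_irreducible :: "('a, 'b) ring_scheme \<Rightarrow> 'a set \<Rightarrow> 'a set \<Rightarrow> 'a set \<Rightarrow> bool" where
  "Pi_irreducible R k L T \<longleftrightarrow> T \<in> interm R k L \<and>
     (\<forall>T1\<in>interm R k L. \<forall>T2\<in>interm R k L. T = compositum R T1 T2 \<longrightarrow> T = T1 \<or> T = T2)"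

definition Gal :: "('a, 'b) ring_scheme \<Rightarrow> 'a set \<Rightarrow> 'a set \<Rightarrow> ('a \<Rightarrow> 'a) set" where
  "Gal R k L = {\<sigma>. \<sigma> \<in> ring_iso (R\<lparr>carrier := L\<rparr>) (R\<lparr>carrier := L\<rparr>) \<and> (\<forall>x\<in>k. \<sigma> x = x)}"

definition galois_ext :: "('a, 'b) ring_scheme \<Rightarrow> 'a set \<Rightarrow> 'a set \<Rightarrow> bool" where
  "galois_ext R k L \<longleftrightarrow> subfield k R \<and> subfield L R \<and> k \<subseteq> L \<and>
     ring.finite_dimension R k L \<and> {x\<in>L. \<forall>\<sigma>\<in>Gal R k L. \<sigma> x = x} = k"

definition cyclic_ext :: "('a, 'b) ring_scheme \<Rightarrow> 'a set \<Rightarrow> 'a set \<Rightarrow> bool" where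
  "cyclic_ext R k L \<longleftrightarrow> galois_ext R k L \<and>
     (\<exists>\<sigma>\<in>Gal R k L. \<forall>\<tau>\<in>Gal R k L. \<exists>n. \<forall>x\<in>L. \<tau> x = (\<sigma> ^^ n) x)"

end

theory Submission
  imports Defs
begin


context field
begin

lemma minus_zero_imp_eq:
  assumes "a \<in> carrier R" "b \<in> carrier R" "a \<ominus> b = \<zero>" shows "a = b"
proof -
  have "a = (a \<ominus> b) \<oplus> b" using assms(1,2) by algebra
  thus ?thesis using assms by simp
qed

lemma finsum_split_out:
  assumes "finite I" "j \<in> I" "g \<in> I \<rightarrow> carrier R"
  shows "finsum R g I = g j \<oplus> finsum R g (I - {j})"
proof -
  have "I = insert j (I - {j})" using assms by auto
  thus ?thesis
    using assms by (metis Diff_iff Pi_split_insert_domain finite_Diff finsum_insert insertI1)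
qed

lemma finsum_remove_zero:
  assumes "finite I" "j \<in> I" "g \<in> I \<rightarrow> carrier R" "g j = \<zero>"
  shows "finsum R g I = finsum R g (I - {j})"
proof -
  have "I = insert j (I - {j})" using assms by auto
  hence "finsum R g I = g j \<oplus> finsum R g (I - {j})"
    using assms by (metis Diff_iff Pi_split_insert_domain finite_Diff finsum_insert insertI1)
  moreover have "finsum R g (I - {j}) \<in> carrier R" using assms by (intro finsum_closed) auto
  ultimately show ?thesis using assms by simp
qed

lemma finsum_minus:
  assumes "finite I" "f \<in> I \<rightarrow> carrier R" "g \<in> I \<rightarrow> carrier R"
  shows "finsum R (\<lambda>i. f i \<ominus> g i) I = finsum R f I \<ominus> finsum R g I"
  using assms
proof (induct I rule: finite_induct)
  case empty then show ?case by (simp add: a_minus_def)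
next
  case (insert x F)
  have fx: "f x \<in> carrier R" "g x \<in> carrier R" using insert by auto
  have fF: "f \<in> F \<rightarrow> carrier R" "g \<in> F \<rightarrow> carrier R" using insert by auto
  have "(\<lambda>i. f i \<ominus> g i) \<in> F \<rightarrow> carrier R" using fF by auto
  hence "finsum R (\<lambda>i. f i \<ominus> g i) (insert x F) = (f x \<ominus> g x) \<oplus> finsum R (\<lambda>i. f i \<ominus> g i) F"
    using insert fx by (subst finsum_insert) auto
  also have "\<dots> = (f x \<ominus> g x) \<oplus> (finsum R f F \<ominus> finsum R g F)" using insert fF by simp
  also have "\<dots> = (f x \<oplus> finsum R f F) \<ominus> (g x \<oplus> finsum R g F)"
    using fx finsum_closed[OF fF(1)] finsum_closed[OF fF(2)] by algebra
  also have "\<dots> = finsum R f (insert x F) \<ominus> finsum R g (insert x F)"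
    using insert fx fF by simp
  finally show ?case .
qed

lemma finsum_in_subring:
  assumes "subring K R" "finite I" "\<And>i. i \<in> I \<Longrightarrow> f i \<in> K"
  shows "finsum R f I \<in> K"
  using assms(2,3)
proof (induct I rule: finite_induct)
  case empty then show ?case using subringE(2)[OF assms(1)] by simp
next
  case (insert x F)
  have "f \<in> F \<rightarrow> carrier R" using insert subringE(1)[OF assms(1)] by auto
  moreover have "f x \<in> carrier R" using insert subringE(1)[OF assms(1)] by auto
  ultimately show ?case using insert subringE(7)[OF assms(1)] by simp
qed

lemma hom_system:
  assumes K: "subfield K R" and fJ: "finite J"
  shows "\<And>I a. finite I \<Longrightarrow> card J < card I \<Longrightarrow> (\<And>j i. j \<in> J \<Longrightarrow> i \<in> I \<Longrightarrow> a j i \<in> K) \<Longrightarrow>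
    \<exists>c. (\<forall>i\<in>I. c i \<in> K) \<and> (\<exists>i\<in>I. c i \<noteq> \<zero>) \<and> (\<forall>j\<in>J. (\<Oplus>i\<in>I. c i \<otimes> a j i) = \<zero>)"
  using fJ
proof (induct J rule: finite_induct)
  case empty
  then obtain i where "i \<in> I" by fastforce
  moreover have "\<one> \<in> K" using subringE(3)[OF subfieldE(1)[OF K]] .
  ultimately show ?case by (intro exI[of _ "\<lambda>_. \<one>"]) auto
next
  case (insert j0 J)
  note Ksub = subfieldE(1)[OF K]
  note KR = subfieldE(3)[OF K]
  show ?case
  proof (cases "\<forall>i\<in>I. a j0 i = \<zero>")
    case True
    have "card J < card I" using insert by simp
    then obtain c where c: "\<forall>i\<in>I. c i \<in> K" "\<exists>i\<in>I. c i \<noteq> \<zero>" "\<forall>j\<in>J. (\<Oplus>i\<in>I. c i \<otimes> a j i) = \<zero>"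
      using insert(3)[of I a] insert(4,6) by blast
    have "(\<Oplus>i\<in>I. c i \<otimes> a j0 i) = (\<Oplus>i\<in>I. \<zero>)"
      using True c(1) KR by (intro finsum_cong') auto
    then show ?thesis using c by (intro exI[of _ c]) auto
  next
    case False
    then obtain i0 where i0: "i0 \<in> I" "a j0 i0 \<noteq> \<zero>" by auto
    have a0K: "a j0 i0 \<in> K" using insert i0 by auto
    define b where "b = inv (a j0 i0)"
    have bK: "b \<in> K" unfolding b_def using subfield_m_inv(1)[OF K, of "a j0 i0"] a0K i0 by auto
    define I' where "I' = I - {i0}"
    define a' where "a' = (\<lambda>j i. a j i \<ominus> a j i0 \<otimes> b \<otimes> a j0 i)"
    have fI': "finite I'" using insert unfolding I'_def by auto
    have cI': "card J < card I'" using insert i0 unfolding I'_def by (simp add: card_Diff_singleton)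
    have aK: "\<And>j i. j \<in> insert j0 J \<Longrightarrow> i \<in> I \<Longrightarrow> a j i \<in> K" using insert by auto
    have a'K: "a' j i \<in> K" if "j \<in> J" "i \<in> I'" for j i
      unfolding a'_def using aK[of j i] aK[of j i0] aK[of j0 i] i0 that bK Ksub unfolding I'_def
      by (auto simp: a_minus_def intro!: subringE(5,6,7)[OF Ksub])
    obtain c' where c': "\<forall>i\<in>I'. c' i \<in> K" "\<exists>i\<in>I'. c' i \<noteq> \<zero>" "\<forall>j\<in>J. (\<Oplus>i\<in>I'. c' i \<otimes> a' j i) = \<zero>"
      using insert(3)[OF fI' cI'] a'K by blast
    define s where "s = (\<Oplus>i\<in>I'. c' i \<otimes> a j0 i)"
    have sK: "s \<in> K" unfolding s_def
      using c'(1) aK[of j0] by (intro finsum_in_subring[OF Ksub fI']) (auto simp: I'_def intro: subringE(6)[OF Ksub])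
    define c where "c = (\<lambda>i. if i = i0 then \<ominus> (b \<otimes> s) else c' i)"
    have cK: "\<forall>i\<in>I. c i \<in> K"
      using c'(1) sK bK unfolding c_def I'_def by (auto intro: subringE(5,6)[OF Ksub])
    have cR: "\<And>i. i \<in> I \<Longrightarrow> c i \<in> carrier R" using cK KR by auto
    have aR: "\<And>j i. j \<in> insert j0 J \<Longrightarrow> i \<in> I \<Longrightarrow> a j i \<in> carrier R" using aK KR by auto
    have I_split: "\<And>j. j \<in> insert j0 J \<Longrightarrow>
        (\<Oplus>i\<in>I. c i \<otimes> a j i) = c i0 \<otimes> a j i0 \<oplus> (\<Oplus>i\<in>I'. c' i \<otimes> a j i)"
    proof -
      fix j assume j: "j \<in> insert j0 J"
      have "I = insert i0 I'" using i0 unfolding I'_def by auto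
      have "(\<Oplus>i\<in>I. c i \<otimes> a j i) = c i0 \<otimes> a j i0 \<oplus> (\<Oplus>i\<in>I'. c i \<otimes> a j i)"
        unfolding I'_def using insert(4) cR aR[OF j] i0 by (intro finsum_split_out) auto
      moreover have "(\<Oplus>i\<in>I'. c i \<otimes> a j i) = (\<Oplus>i\<in>I'. c' i \<otimes> a j i)"
      proof (intro finsum_cong')
        show "(\<lambda>i. c' i \<otimes> a j i) \<in> I' \<rightarrow> carrier R" using c'(1) KR aR[OF j] unfolding I'_def by auto
      qed (auto simp: c_def I'_def)
      ultimately show "(\<Oplus>i\<in>I. c i \<otimes> a j i) = c i0 \<otimes> a j i0 \<oplus> (\<Oplus>i\<in>I'. c' i \<otimes> a j i)" by simp
    qed
    have bR: "b \<in> carrier R" "s \<in> carrier R" "a j0 i0 \<in> carrier R" using bK sK a0K KR by auto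
    have ba: "b \<otimes> a j0 i0 = \<one>" unfolding b_def using subfield_m_inv(3)[OF K, of "a j0 i0"] a0K i0 by auto
    have eq0: "(\<Oplus>i\<in>I. c i \<otimes> a j0 i) = \<zero>"
    proof -
      have "(\<Oplus>i\<in>I. c i \<otimes> a j0 i) = \<ominus> (b \<otimes> s) \<otimes> a j0 i0 \<oplus> s"
        using I_split[of j0] unfolding c_def s_def by simp
      also have "\<dots> = \<ominus> ((b \<otimes> a j0 i0) \<otimes> s) \<oplus> s" using bR by algebra
      also have "\<dots> = \<zero>" using ba bR by algebra
      finally show ?thesis .
    qed
    have eqJ: "(\<Oplus>i\<in>I. c i \<otimes> a j i) = \<zero>" if j: "j \<in> J" for j
    proof -
      have c'R: "\<And>i. i \<in> I' \<Longrightarrow> c' i \<in> carrier R" using c'(1) KR by auto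
      have ajR: "\<And>i. i \<in> I' \<Longrightarrow> a j i \<in> carrier R" "\<And>i. i \<in> I' \<Longrightarrow> a j0 i \<in> carrier R"
        using aR j unfolding I'_def by auto
      have aji0: "a j i0 \<in> carrier R" using aR j i0 by auto
      have "\<zero> = (\<Oplus>i\<in>I'. c' i \<otimes> a' j i)" using c'(3) j by auto
      also have "\<dots> = (\<Oplus>i\<in>I'. c' i \<otimes> a j i \<ominus> (a j i0 \<otimes> b) \<otimes> (c' i \<otimes> a j0 i))"
      proof (intro finsum_cong')
        fix i assume i: "i \<in> I'"
        have m: "c' i \<in> carrier R" "a j i \<in> carrier R" "a j0 i \<in> carrier R"
          using i c'R ajR by auto
        show "c' i \<otimes> a' j i = c' i \<otimes> a j i \<ominus> (a j i0 \<otimes> b) \<otimes> (c' i \<otimes> a j0 i)"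
          unfolding a'_def using m aji0 bR by algebra
      next
        show "(\<lambda>i. c' i \<otimes> a j i \<ominus> (a j i0 \<otimes> b) \<otimes> (c' i \<otimes> a j0 i)) \<in> I' \<rightarrow> carrier R"
          using c'R ajR aji0 bR by (auto simp: Pi_def)
      qed simp
      also have "\<dots> = (\<Oplus>i\<in>I'. c' i \<otimes> a j i) \<ominus> (\<Oplus>i\<in>I'. (a j i0 \<otimes> b) \<otimes> (c' i \<otimes> a j0 i))"
        using c'R ajR aji0 bR fI' by (intro finsum_minus) auto
      also have "(\<Oplus>i\<in>I'. (a j i0 \<otimes> b) \<otimes> (c' i \<otimes> a j0 i)) = (a j i0 \<otimes> b) \<otimes> s"
        unfolding s_def using c'R ajR aji0 bR fI' by (subst finsum_rdistr) auto
      finally have e1: "\<zero> = (\<Oplus>i\<in>I'. c' i \<otimes> a j i) \<ominus> (a j i0 \<otimes> b) \<otimes> s" .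
      have eqA: "(\<Oplus>i\<in>I. c i \<otimes> a j i) = \<ominus> (b \<otimes> s) \<otimes> a j i0 \<oplus> (\<Oplus>i\<in>I'. c' i \<otimes> a j i)"
        using I_split[of j] j unfolding c_def by simp
      have X: "(\<Oplus>i\<in>I'. c' i \<otimes> a j i) \<in> carrier R" using c'R ajR by (intro finsum_closed) auto
      have Y: "(a j i0 \<otimes> b) \<otimes> s \<in> carrier R" using aji0 bR by simp
      have eqX: "(\<Oplus>i\<in>I'. c' i \<otimes> a j i) = (a j i0 \<otimes> b) \<otimes> s"
        by (rule minus_zero_imp_eq[OF X Y e1[symmetric]])
      have eqZ: "\<ominus> (b \<otimes> s) \<otimes> a j i0 \<oplus> (a j i0 \<otimes> b) \<otimes> s = \<zero>" using aji0 bR by algebra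
      show ?thesis unfolding eqA eqX eqZ ..
    qed
    obtain i1 where i1: "i1 \<in> I'" "c' i1 \<noteq> \<zero>" using c'(2) by auto
    have "c i1 \<noteq> \<zero>" "i1 \<in> I" using i1 unfolding c_def I'_def by auto
    thus ?thesis
      using cK eq0 eqJ by (intro exI[of _ c]) blast
  qed
qed

end


context field
begin

lemma dedekind_aux:
  assumes T1: "\<one> \<in> T" and Tm: "\<And>x y. x \<in> T \<Longrightarrow> y \<in> T \<Longrightarrow> x \<otimes> y \<in> T" and Tc: "T \<subseteq> carrier R"
  shows "\<And>I c. card I = N \<Longrightarrow> finite I \<Longrightarrow>
    (\<And>i x. i \<in> I \<Longrightarrow> x \<in> T \<Longrightarrow> f i x \<in> carrier R) \<Longrightarrow>
    (\<And>i x y. i \<in> I \<Longrightarrow> x \<in> T \<Longrightarrow> y \<in> T \<Longrightarrow> f i (x \<otimes> y) = f i x \<otimes> f i y) \<Longrightarrow>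
    (\<And>i. i \<in> I \<Longrightarrow> f i \<one> = \<one>) \<Longrightarrow>
    (\<And>i j. i \<in> I \<Longrightarrow> j \<in> I \<Longrightarrow> i \<noteq> j \<Longrightarrow> \<exists>x\<in>T. f i x \<noteq> f j x) \<Longrightarrow>
    (\<And>i. i \<in> I \<Longrightarrow> c i \<in> carrier R) \<Longrightarrow>
    (\<And>x. x \<in> T \<Longrightarrow> (\<Oplus>i\<in>I. c i \<otimes> f i x) = \<zero>) \<Longrightarrow>
    (\<forall>i\<in>I. c i = \<zero>)"
proof (induct N rule: less_induct)
  case (less N I c)
  show ?case
  proof (rule ccontr)
    assume "\<not> (\<forall>i\<in>I. c i = \<zero>)"
    then obtain t where t: "t \<in> I" "c t \<noteq> \<zero>" by auto
    show False
    proof (cases "I = {t}")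
      case True
      have f1: "f t \<one> = \<one>" using less(6)[OF t(1)] .
      have ct: "c t \<in> carrier R" using less(8)[OF t(1)] .
      have "(\<Oplus>i\<in>I. c i \<otimes> f i \<one>) = c t"
        unfolding True using f1 ct by simp
      thus False using less(9)[OF T1] t by simp
    next
      case False
      then obtain s where s: "s \<in> I" "s \<noteq> t" using t by auto
      obtain y where y: "y \<in> T" "f s y \<noteq> f t y" using less(7)[OF s(1) t(1) s(2)] by auto
      have yR: "y \<in> carrier R" using y Tc by auto
      define I' where "I' = I - {t}"
      define d where "d = (\<lambda>i. c i \<otimes> (f i y \<ominus> f t y))"
      have fI': "finite I'" "card I' < N" using less(2,3) card_Diff1_less[OF less(3) t(1)] unfolding I'_def
        by auto
      have dR: "\<And>i. i \<in> I' \<Longrightarrow> d i \<in> carrier R"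
        unfolding d_def I'_def using less(4,8) y t by auto
      have rel': "(\<Oplus>i\<in>I'. d i \<otimes> f i x) = \<zero>" if x: "x \<in> T" for x
      proof -
        have xR: "x \<in> carrier R" using x Tc by auto
        have fR: "\<And>i z. i \<in> I \<Longrightarrow> z \<in> T \<Longrightarrow> f i z \<in> carrier R" using less(4) by auto
        have cR: "\<And>i. i \<in> I \<Longrightarrow> c i \<in> carrier R" using less(8) by auto
        have A: "(\<Oplus>i\<in>I. (c i \<otimes> f i y) \<otimes> f i x) = \<zero>"
        proof -
          have "(\<Oplus>i\<in>I. (c i \<otimes> f i y) \<otimes> f i x) = (\<Oplus>i\<in>I. c i \<otimes> f i (y \<otimes> x))"
          proof (intro finsum_cong')
            fix i assume i: "i \<in> I"
            show "c i \<otimes> f i y \<otimes> f i x = c i \<otimes> f i (y \<otimes> x)"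
              using less(5)[OF i y(1) x] fR[OF i y(1)] fR[OF i x] cR[OF i] by (simp add: m_assoc)
          next
            show "(\<lambda>i. c i \<otimes> f i (y \<otimes> x)) \<in> I \<rightarrow> carrier R"
              using fR cR Tm[OF y(1) x] by auto
          qed simp
          thus ?thesis using less(9)[OF Tm[OF y(1) x]] by simp
        qed
        have B: "(\<Oplus>i\<in>I. f t y \<otimes> (c i \<otimes> f i x)) = \<zero>"
        proof -
          have "(\<Oplus>i\<in>I. f t y \<otimes> (c i \<otimes> f i x)) = f t y \<otimes> (\<Oplus>i\<in>I. c i \<otimes> f i x)"
            using fR cR t y x less(3) by (subst finsum_rdistr) auto
          thus ?thesis using less(9)[OF x] fR[OF t(1) y(1)] by simp
        qed
        have "(\<Oplus>i\<in>I. (c i \<otimes> f i y) \<otimes> f i x \<ominus> f t y \<otimes> (c i \<otimes> f i x)) = \<zero> \<ominus> \<zero>"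
          using A B fR cR t y x less(3) by (subst finsum_minus) auto
        hence C: "(\<Oplus>i\<in>I. d i \<otimes> f i x) = \<zero>"
        proof -
          assume h: "(\<Oplus>i\<in>I. (c i \<otimes> f i y) \<otimes> f i x \<ominus> f t y \<otimes> (c i \<otimes> f i x)) = \<zero> \<ominus> \<zero>"
          have "(\<Oplus>i\<in>I. d i \<otimes> f i x) = (\<Oplus>i\<in>I. (c i \<otimes> f i y) \<otimes> f i x \<ominus> f t y \<otimes> (c i \<otimes> f i x))"
          proof (intro finsum_cong')
            fix i assume i: "i \<in> I"
            have m: "c i \<in> carrier R" "f i y \<in> carrier R" "f t y \<in> carrier R" "f i x \<in> carrier R"
              using fR[OF i y(1)] fR[OF t(1) y(1)] fR[OF i x] cR[OF i] by auto
            show "d i \<otimes> f i x = (c i \<otimes> f i y) \<otimes> f i x \<ominus> f t y \<otimes> (c i \<otimes> f i x)"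
              unfolding d_def using m by algebra
          next
            show "(\<lambda>i. c i \<otimes> f i y \<otimes> f i x \<ominus> f t y \<otimes> (c i \<otimes> f i x)) \<in> I \<rightarrow> carrier R"
              using fR cR t y x by (auto simp: a_minus_def)
          qed simp
          thus ?thesis using h by (simp add: a_minus_def)
        qed
        have "d t = \<zero>" unfolding d_def using cR[OF t(1)] fR[OF t(1) y(1)] by algebra
        moreover have "(\<lambda>i. d i \<otimes> f i x) \<in> I \<rightarrow> carrier R"
          unfolding d_def using fR cR t y x by (auto simp: a_minus_def)
        ultimately have "(\<Oplus>i\<in>I. d i \<otimes> f i x) = (\<Oplus>i\<in>I'. d i \<otimes> f i x)"
          unfolding I'_def using less(3) t fR[OF t(1) x] by (intro finsum_remove_zero) auto
        thus ?thesis using C by simp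
      qed
      have "\<forall>i\<in>I'. d i = \<zero>"
        using less(1)[OF fI'(2) refl fI'(1), of d] less(4,5,6,7) rel' dR unfolding I'_def by auto
      hence "d s = \<zero>" using s unfolding I'_def by auto
      moreover have "f s y \<ominus> f t y \<noteq> \<zero>"
        using y less(4)[OF s(1) y(1)] less(4)[OF t(1) y(1)] minus_zero_imp_eq by blast
      moreover have "c s \<in> carrier R" "f s y \<ominus> f t y \<in> carrier R"
        using less(4)[OF s(1) y(1)] less(4)[OF t(1) y(1)] less(8)[OF s(1)] by auto
      ultimately have cs: "c s = \<zero>" unfolding d_def using integral by blast
      define I'' where "I'' = I - {s}"
      have fI'': "finite I''" "card I'' < N" using less(2,3) card_Diff1_less[OF less(3) s(1)] unfolding I''_def
        by auto
      have rel'': "(\<Oplus>i\<in>I''. c i \<otimes> f i x) = \<zero>" if x: "x \<in> T" for x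
      proof -
        have "(\<lambda>i. c i \<otimes> f i x) \<in> I \<rightarrow> carrier R" using less(4,8) x by auto
        hence "(\<Oplus>i\<in>I. c i \<otimes> f i x) = (\<Oplus>i\<in>I''. c i \<otimes> f i x)"
          unfolding I''_def using less(3) s cs less(4)[OF s(1) x] by (intro finsum_remove_zero) auto
        thus ?thesis using less(9)[OF x] by simp
      qed
      have "\<forall>i\<in>I''. c i = \<zero>"
        using less(1)[OF fI''(2) refl fI''(1), of c] less(4,5,6,7,8) rel'' unfolding I''_def by auto
      thus False using t s unfolding I''_def by auto
    qed
  qed
qed

lemma dedekind:
  assumes "\<one> \<in> T" "\<And>x y. x \<in> T \<Longrightarrow> y \<in> T \<Longrightarrow> x \<otimes> y \<in> T" "T \<subseteq> carrier R"
    and "finite I"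
    and "\<And>i x. i \<in> I \<Longrightarrow> x \<in> T \<Longrightarrow> f i x \<in> carrier R"
    and "\<And>i x y. i \<in> I \<Longrightarrow> x \<in> T \<Longrightarrow> y \<in> T \<Longrightarrow> f i (x \<otimes> y) = f i x \<otimes> f i y"
    and "\<And>i. i \<in> I \<Longrightarrow> f i \<one> = \<one>"
    and "\<And>i j. i \<in> I \<Longrightarrow> j \<in> I \<Longrightarrow> i \<noteq> j \<Longrightarrow> \<exists>x\<in>T. f i x \<noteq> f j x"
    and "\<And>i. i \<in> I \<Longrightarrow> c i \<in> carrier R"
    and "\<And>x. x \<in> T \<Longrightarrow> (\<Oplus>i\<in>I. c i \<otimes> f i x) = \<zero>"
  shows "\<forall>i\<in>I. c i = \<zero>"
  using dedekind_aux[OF assms(1-3) refl assms(4-10)] by blast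

end


context field
begin

lemma span_induct:
  assumes K: "subfield K R" and Us: "set Us \<subseteq> carrier R"
    and P0: "P \<zero>"
    and Padd: "\<And>x y. x \<in> carrier R \<Longrightarrow> y \<in> carrier R \<Longrightarrow> P x \<Longrightarrow> P y \<Longrightarrow> P (x \<oplus> y)"
    and Psm: "\<And>k x. k \<in> K \<Longrightarrow> x \<in> carrier R \<Longrightarrow> P x \<Longrightarrow> P (k \<otimes> x)"
    and Pb: "\<And>u. u \<in> set Us \<Longrightarrow> P u"
    and x: "x \<in> Span K Us"
  shows "P x"
proof -
  obtain Ks where Ks: "set Ks \<subseteq> K" "x = combine Ks Us"
    using x Span_eq_combine_set[OF K Us] by auto
  have KR: "K \<subseteq> carrier R" using subfieldE(3)[OF K] .
  have "\<And>Ks. set Ks \<subseteq> K \<Longrightarrow> P (combine Ks Us)"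
    using Us Pb
  proof (induct Us)
    case Nil then show ?case using P0 by (cases Ks) auto
  next
    case (Cons u Us)
    show ?case
    proof (cases Ks)
      case Nil then show ?thesis using P0 by simp
    next
      case (Cons k Ks')
      have kK: "k \<in> K" and Ks': "set Ks' \<subseteq> K" using Cons \<open>set Ks \<subseteq> K\<close> by auto
      have uR: "u \<in> carrier R" and UsR: "set Us \<subseteq> carrier R" using \<open>set (u # Us) \<subseteq> carrier R\<close> by auto
      have "P (combine Ks' Us)" using Cons.hyps[OF Ks' UsR] \<open>\<And>v. v \<in> set (u # Us) \<Longrightarrow> P v\<close> by auto
      moreover have "P (k \<otimes> u)" using Psm[OF kK uR] \<open>\<And>v. v \<in> set (u # Us) \<Longrightarrow> P v\<close> by auto
      moreover have "combine Ks' Us \<in> carrier R" using combine_in_carrier[of Ks' Us] Ks' KR UsR by auto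
      moreover have "k \<otimes> u \<in> carrier R" using kK KR uR by auto
      ultimately show ?thesis unfolding Cons by (simp add: Padd)
    qed
  qed
  thus ?thesis using Ks by simp
qed

lemma dedekind_bound:
  assumes K: "subfield K R" and T: "subfield T R" and KT: "K \<subseteq> T" and fd: "finite_dimension K T"
    and I: "finite I"
    and fc: "\<And>i x. i \<in> I \<Longrightarrow> x \<in> T \<Longrightarrow> f i x \<in> carrier R"
    and fa: "\<And>i x y. i \<in> I \<Longrightarrow> x \<in> T \<Longrightarrow> y \<in> T \<Longrightarrow> f i (x \<oplus> y) = f i x \<oplus> f i y"
    and fm: "\<And>i x y. i \<in> I \<Longrightarrow> x \<in> T \<Longrightarrow> y \<in> T \<Longrightarrow> f i (x \<otimes> y) = f i x \<otimes> f i y"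
    and fK: "\<And>i x. i \<in> I \<Longrightarrow> x \<in> K \<Longrightarrow> f i x = x"
    and dist: "\<And>i j. i \<in> I \<Longrightarrow> j \<in> I \<Longrightarrow> i \<noteq> j \<Longrightarrow> \<exists>x\<in>T. f i x \<noteq> f j x"
  shows "card I \<le> dim K T"
proof (rule ccontr)
  assume "\<not> card I \<le> dim K T"
  hence lt: "card {..<dim K T} < card I" by simp
  have TR: "T \<subseteq> carrier R" using subfieldE(3)[OF T] .
  have KR: "K \<subseteq> carrier R" using subfieldE(3)[OF K] .
  obtain Bs where Bs: "set Bs \<subseteq> carrier R" "independent K Bs" "length Bs = dim K T" "Span K Bs = T"
    using exists_base[OF K finite_dimensionE[OF K fd]] unfolding over_def by auto
  have BsT: "set Bs \<subseteq> T" using Span_base_incl[OF K Bs(1)] Bs(4) by auto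
  obtain c where c: "\<forall>i\<in>I. c i \<in> carrier R" "\<exists>i\<in>I. c i \<noteq> \<zero>"
      "\<forall>j\<in>{..<dim K T}. (\<Oplus>i\<in>I. c i \<otimes> f i (Bs ! j)) = \<zero>"
    using hom_system[OF carrier_is_subfield finite_lessThan I lt, of "\<lambda>j i. f i (Bs ! j)"]
      fc BsT Bs(3) by (auto simp: subset_iff)
  have cR: "\<And>i. i \<in> I \<Longrightarrow> c i \<in> carrier R" using c(1) by auto
  have one: "\<one> \<in> T" using subringE(3)[OF subfieldE(1)[OF T]] .
  have zK: "\<zero> \<in> K" using subringE(2)[OF subfieldE(1)[OF K]] .
  define P where "P = (\<lambda>x. x \<in> T \<and> (\<Oplus>i\<in>I. c i \<otimes> f i x) = \<zero>)"
  have allP: "P x" if x: "x \<in> T" for x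
  proof (rule span_induct[OF K Bs(1)])
    have "(\<Oplus>i\<in>I. c i \<otimes> f i \<zero>) = \<zero>"
      using zK fK cR by (intro add.finprod_one_eqI) auto
    thus "P \<zero>" unfolding P_def using zK KT by auto
  next
    fix x y assume xy: "x \<in> carrier R" "y \<in> carrier R" "P x" "P y"
    hence xT: "x \<in> T" "y \<in> T" unfolding P_def by auto
    have "(\<Oplus>i\<in>I. c i \<otimes> f i (x \<oplus> y)) = (\<Oplus>i\<in>I. c i \<otimes> f i x \<oplus> c i \<otimes> f i y)"
      using fa xT cR fc by (intro finsum_cong') (auto simp: r_distr)
    also have "\<dots> = (\<Oplus>i\<in>I. c i \<otimes> f i x) \<oplus> (\<Oplus>i\<in>I. c i \<otimes> f i y)"
      using xT cR fc by (intro finsum_addf) auto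
    finally show "P (x \<oplus> y)" using xy xT unfolding P_def
      by (auto intro: subringE(7)[OF subfieldE(1)[OF T]])
  next
    fix k x assume kx: "k \<in> K" "x \<in> carrier R" "P x"
    hence xT: "x \<in> T" and kT: "k \<in> T" using KT unfolding P_def by auto
    have "(\<Oplus>i\<in>I. c i \<otimes> f i (k \<otimes> x)) = (\<Oplus>i\<in>I. k \<otimes> (c i \<otimes> f i x))"
    proof (intro finsum_cong')
      fix i assume i: "i \<in> I"
      have "f i (k \<otimes> x) = k \<otimes> f i x" using fm[OF i kT xT] fK[OF i kx(1)] by simp
      moreover have "k \<in> carrier R" "c i \<in> carrier R" "f i x \<in> carrier R"
        using kx KR cR[OF i] fc[OF i xT] by auto
      ultimately show "c i \<otimes> f i (k \<otimes> x) = k \<otimes> (c i \<otimes> f i x)" by (simp add: m_lcomm)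
    next
      show "(\<lambda>i. k \<otimes> (c i \<otimes> f i x)) \<in> I \<rightarrow> carrier R" using kx KR cR fc xT by auto
    qed simp
    also have "\<dots> = k \<otimes> (\<Oplus>i\<in>I. c i \<otimes> f i x)"
      using kx KR cR fc xT I by (subst finsum_rdistr) auto
    finally show "P (k \<otimes> x)" using kx xT kT KR unfolding P_def
      by (auto intro: subringE(6)[OF subfieldE(1)[OF T]])
  next
    fix u assume "u \<in> set Bs"
    then obtain j where j: "j < length Bs" "u = Bs ! j" by (auto simp: in_set_conv_nth)
    thus "P u" unfolding P_def using c(3) Bs(3) BsT nth_mem[OF j(1)] by auto
  next
    show "x \<in> Span K Bs" using x Bs(4) by simp
  qed
  have "\<forall>i\<in>I. c i = \<zero>"
  proof (rule dedekind[OF one _ TR I])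
    show "\<And>x y. x \<in> T \<Longrightarrow> y \<in> T \<Longrightarrow> x \<otimes> y \<in> T" using subringE(6)[OF subfieldE(1)[OF T]] by auto
    show "\<And>i x. i \<in> I \<Longrightarrow> x \<in> T \<Longrightarrow> f i x \<in> carrier R" by (rule fc)
    show "\<And>i x y. i \<in> I \<Longrightarrow> x \<in> T \<Longrightarrow> y \<in> T \<Longrightarrow> f i (x \<otimes> y) = f i x \<otimes> f i y" by (rule fm)
    show "\<And>i. i \<in> I \<Longrightarrow> f i \<one> = \<one>" using fK subringE(3)[OF subfieldE(1)[OF K]] by auto
    show "\<And>i j. i \<in> I \<Longrightarrow> j \<in> I \<Longrightarrow> i \<noteq> j \<Longrightarrow> \<exists>x\<in>T. f i x \<noteq> f j x" by (rule dist)
    show "\<And>i. i \<in> I \<Longrightarrow> c i \<in> carrier R" by (rule cR)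
    show "\<And>x. x \<in> T \<Longrightarrow> (\<Oplus>i\<in>I. c i \<otimes> f i x) = \<zero>" using allP unfolding P_def by auto
  qed
  thus False using c(2) by auto
qed

end


definition Lhom :: "('a, 'b) ring_scheme \<Rightarrow> 'a set \<Rightarrow> ('a \<Rightarrow> 'a) \<Rightarrow> bool" where
  "Lhom R L g \<longleftrightarrow> (\<forall>x\<in>L. g x \<in> L) \<and>
     (\<forall>x\<in>L. \<forall>y\<in>L. g (x \<oplus>\<^bsub>R\<^esub> y) = g x \<oplus>\<^bsub>R\<^esub> g y \<and> g (x \<otimes>\<^bsub>R\<^esub> y) = g x \<otimes>\<^bsub>R\<^esub> g y) \<and>
     g \<one>\<^bsub>R\<^esub> = \<one>\<^bsub>R\<^esub>"

context field
begin

lemma field_inv_r: "x \<in> carrier R \<Longrightarrow> x \<noteq> \<zero> \<Longrightarrow> x \<otimes> inv x = \<one>"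
  using field_Units by (intro Units_r_inv) auto

lemma field_inv_closed: "x \<in> carrier R \<Longrightarrow> x \<noteq> \<zero> \<Longrightarrow> inv x \<in> carrier R"
  using field_Units by (intro Units_inv_closed) auto

lemma field_inv_nz: "x \<in> carrier R \<Longrightarrow> x \<noteq> \<zero> \<Longrightarrow> inv x \<noteq> \<zero>"
  using field_inv_r by fastforce

context
  fixes L g assumes L: "subfield L R" and g: "Lhom R L g"
begin

lemma LR: "L \<subseteq> carrier R" using subfieldE(3)[OF L] .
lemma Lsub: "subring L R" using subfieldE(1)[OF L] .
lemma L_add: "x \<in> L \<Longrightarrow> y \<in> L \<Longrightarrow> x \<oplus> y \<in> L" using subringE(7)[OF Lsub] by auto
lemma L_mult: "x \<in> L \<Longrightarrow> y \<in> L \<Longrightarrow> x \<otimes> y \<in> L" using subringE(6)[OF Lsub] by auto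
lemma L_neg: "x \<in> L \<Longrightarrow> \<ominus> x \<in> L" using subringE(5)[OF Lsub] by auto
lemma L_minus: "x \<in> L \<Longrightarrow> y \<in> L \<Longrightarrow> x \<ominus> y \<in> L" using L_add L_neg by (simp add: a_minus_def)
lemma L_zero: "\<zero> \<in> L" using subringE(2)[OF Lsub] .
lemma L_one: "\<one> \<in> L" using subringE(3)[OF Lsub] .
lemma L_inv: "x \<in> L \<Longrightarrow> x \<noteq> \<zero> \<Longrightarrow> inv x \<in> L" using subfield_m_inv(1)[OF L] by auto
lemma L_car: "x \<in> L \<Longrightarrow> x \<in> carrier R" using LR by auto

lemma g_L: "x \<in> L \<Longrightarrow> g x \<in> L" using g unfolding Lhom_def by auto
lemma g_car: "x \<in> L \<Longrightarrow> g x \<in> carrier R" using g_L L_car by auto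
lemma g_add: "x \<in> L \<Longrightarrow> y \<in> L \<Longrightarrow> g (x \<oplus> y) = g x \<oplus> g y" using g unfolding Lhom_def by auto
lemma g_mult: "x \<in> L \<Longrightarrow> y \<in> L \<Longrightarrow> g (x \<otimes> y) = g x \<otimes> g y" using g unfolding Lhom_def by auto
lemma g_one: "g \<one> = \<one>" using g unfolding Lhom_def by auto
lemma g_zero: "g \<zero> = \<zero>"
proof -
  have "g \<zero> = g (\<zero> \<oplus> \<zero>)" by simp
  also have "\<dots> = g \<zero> \<oplus> g \<zero>" using g_add[OF L_zero L_zero] .
  finally have "g \<zero> \<oplus> g \<zero> = g \<zero> \<oplus> \<zero>" using g_car[OF L_zero] by simp
  hence "g \<zero> \<oplus> g \<zero> = g \<zero>" using g_car[OF L_zero] by simp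
  thus ?thesis using add.l_cancel_one[OF g_car[OF L_zero] g_car[OF L_zero]] by simp
qed
lemma g_neg: "x \<in> L \<Longrightarrow> g (\<ominus> x) = \<ominus> g x"
proof -
  assume x: "x \<in> L"
  have "g x \<oplus> g (\<ominus> x) = \<zero>" using g_add[OF x L_neg[OF x]] x L_car g_zero by (simp add: r_neg)
  hence "g (\<ominus> x) \<oplus> g x = \<zero>" using g_car[OF x] g_car[OF L_neg[OF x]] a_comm by simp
  from minus_equality[OF this g_car[OF x] g_car[OF L_neg[OF x]]] show ?thesis by simp
qed
lemma g_minus: "x \<in> L \<Longrightarrow> y \<in> L \<Longrightarrow> g (x \<ominus> y) = g x \<ominus> g y"
  using g_add g_neg L_neg by (simp add: a_minus_def)
lemma g_inv: "x \<in> L \<Longrightarrow> x \<noteq> \<zero> \<Longrightarrow> g (inv x) = inv (g x)"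
proof -
  assume x: "x \<in> L" "x \<noteq> \<zero>"
  have "g x \<otimes> g (inv x) = \<one>" using g_mult[OF x(1) L_inv[OF x]] field_inv_r[OF L_car[OF x(1)] x(2)] g_one by simp
  from comm_inv_char[OF g_car[OF x(1)] g_car[OF L_inv[OF x]] this] show ?thesis by simp
qed
lemma g_inj: "x \<in> L \<Longrightarrow> y \<in> L \<Longrightarrow> g x = g y \<Longrightarrow> x = y"
proof -
  assume xy: "x \<in> L" "y \<in> L" "g x = g y"
  have "g (x \<ominus> y) = \<zero>" using g_minus[OF xy(1,2)] xy g_car by (simp add: a_minus_def r_neg)
  hence "x \<ominus> y = \<zero>"
  proof (rule contrapos_pp)
    assume nz: "x \<ominus> y \<noteq> \<zero>"
    have m: "x \<ominus> y \<in> L" using L_minus xy by auto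
    have "g (x \<ominus> y) \<otimes> g (inv (x \<ominus> y)) = \<one>"
      using g_mult[OF m L_inv[OF m nz]] field_inv_r[OF L_car[OF m] nz] g_one by simp
    thus "g (x \<ominus> y) \<noteq> \<zero>" using g_car[OF L_inv[OF m nz]] by auto
  qed
  thus ?thesis by (rule minus_zero_imp_eq[OF L_car[OF xy(1)] L_car[OF xy(2)]])
qed

lemma g_finsum: "finite I \<Longrightarrow> (\<And>i. i \<in> I \<Longrightarrow> f i \<in> L) \<Longrightarrow> g (finsum R f I) = (\<Oplus>i\<in>I. g (f i))"
proof (induct I rule: finite_induct)
  case empty then show ?case using g_zero by simp
next
  case (insert x F)
  have fF: "f \<in> F \<rightarrow> carrier R" "f x \<in> carrier R" using insert L_car by auto
  have gF: "(\<lambda>i. g (f i)) \<in> F \<rightarrow> carrier R" "g (f x) \<in> carrier R" using insert g_car by auto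
  have "finsum R f F \<in> L" using insert by (intro finsum_in_subring[OF Lsub]) auto
  hence "g (finsum R f (insert x F)) = g (f x) \<oplus> g (finsum R f F)"
    using insert fF g_add by simp
  thus ?case using insert gF by simp
qed

lemma fixed_subfield: "subfield {x \<in> L. g x = x} R"
proof (rule subfieldI')
  show "subring {x \<in> L. g x = x} R"
    by (rule subringI) (auto simp: L_car L_one g_one L_neg g_neg L_mult g_mult L_add g_add)
  show "\<And>k. k \<in> {x \<in> L. g x = x} - {\<zero>} \<Longrightarrow> inv k \<in> {x \<in> L. g x = x}"
    using L_inv g_inv by auto
qed

lemma fixed_sub_L: "{x \<in> L. g x = x} \<subseteq> L" by auto

end

lemma Lhom_pow: "subfield L R \<Longrightarrow> Lhom R L g \<Longrightarrow> Lhom R L (g ^^ n)"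
proof (induct n)
  case 0 then show ?case unfolding Lhom_def by simp
next
  case (Suc n)
  have h: "Lhom R L (g ^^ n)" using Suc by simp
  show ?case unfolding Lhom_def
    using g_L[OF Suc(2) h] g_L[OF Suc(2,3)] g_add[OF Suc(2) h] g_add[OF Suc(2,3)]
      g_mult[OF Suc(2) h] g_mult[OF Suc(2,3)] g_one[OF Suc(2) h] g_one[OF Suc(2,3)] by simp
qed

lemma combine_eq_finsum:
  "length Ks = length Us \<Longrightarrow> set Ks \<subseteq> carrier R \<Longrightarrow> set Us \<subseteq> carrier R \<Longrightarrow>
   combine Ks Us = (\<Oplus>i\<in>{..<length Us}. Ks ! i \<otimes> Us ! i)"
proof (induct Us arbitrary: Ks)
  case Nil then show ?case by simp
next
  case (Cons u Us)
  then obtain k Ks' where Ks: "Ks = k # Ks'" by (cases Ks) auto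
  have len: "length Ks' = length Us" using Cons Ks by simp
  have c: "set Ks' \<subseteq> carrier R" "set Us \<subseteq> carrier R" "k \<in> carrier R" "u \<in> carrier R" using Cons Ks by auto
  have eq: "{..<length (u # Us)} = insert 0 (Suc ` {..<length Us})" by (simp add: lessThan_Suc_eq_insert_0)
  have "(\<Oplus>i\<in>{..<length (u # Us)}. Ks ! i \<otimes> (u # Us) ! i) =
     (\<Oplus>i\<in>insert 0 (Suc ` {..<length Us}). Ks ! i \<otimes> (u # Us) ! i)" by (simp only: eq)
  also have "\<dots> = k \<otimes> u \<oplus> (\<Oplus>i\<in>Suc ` {..<length Us}. Ks ! i \<otimes> (u # Us) ! i)"
    using c len unfolding Ks by (subst finsum_insert) (auto simp: Pi_def nth_mem subsetD)
  also have "(\<Oplus>i\<in>Suc ` {..<length Us}. Ks ! i \<otimes> (u # Us) ! i) = (\<Oplus>i\<in>{..<length Us}. Ks' ! i \<otimes> Us ! i)"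
    using c len unfolding Ks by (subst finsum_reindex) (auto simp: Pi_def nth_mem subsetD)
  finally show ?case using Cons(1)[OF len c(1,2)] unfolding Ks by simp
qed

lemma indep_finsum_zero:
  assumes K: "subfield K R" and ind: "independent K Us"
    and c: "\<And>i. i < length Us \<Longrightarrow> c i \<in> K"
    and z: "(\<Oplus>i\<in>{..<length Us}. c i \<otimes> Us ! i) = \<zero>"
  shows "\<forall>i<length Us. c i = \<zero>"
proof -
  define Ks where "Ks = map c [0..<length Us]"
  have KsK: "set Ks \<subseteq> K" unfolding Ks_def using c by auto
  have KR: "K \<subseteq> carrier R" using subfieldE(3)[OF K] .
  have UsR: "set Us \<subseteq> carrier R" using independent_in_carrier[OF ind] .
  have UR: "\<And>i. i < length Us \<Longrightarrow> Us ! i \<in> carrier R" using UsR nth_mem by blast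
  have cR: "\<And>i. i < length Us \<Longrightarrow> c i \<in> carrier R" using c KR by blast
  have "combine Ks Us = (\<Oplus>i\<in>{..<length Us}. Ks ! i \<otimes> Us ! i)"
  proof (rule combine_eq_finsum)
    show "length Ks = length Us" unfolding Ks_def by simp
    show "set Ks \<subseteq> carrier R" using KsK KR by blast
  qed (rule UsR)
  also have "\<dots> = (\<Oplus>i\<in>{..<length Us}. c i \<otimes> Us ! i)"
  proof (rule finsum_cong')
    show "(\<lambda>i. c i \<otimes> Us ! i) \<in> {..<length Us} \<rightarrow> carrier R" using UR cR by simp
    show "\<And>i. i \<in> {..<length Us} \<Longrightarrow> Ks ! i \<otimes> Us ! i = c i \<otimes> Us ! i"
      unfolding Ks_def by simp
  qed simp
  finally have "combine Ks Us = \<zero>" using z by simp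
  hence "set (take (length Us) Ks) \<subseteq> {\<zero>}" using independent_imp_trivial_combine[OF K ind KsK] by simp
  hence h: "c ` {0..<length Us} \<subseteq> {\<zero>}" unfolding Ks_def by simp
  show ?thesis
  proof (intro allI impI)
    fix i assume "i < length Us"
    hence "c i \<in> c ` {0..<length Us}" by simp
    thus "c i = \<zero>" using h by blast
  qed
qed

end


context field
begin

lemma subfield_subalgebra:
  assumes "subfield L R" "K \<subseteq> L" shows "subalgebra K L R"
proof -
  have s: "subring L R" using subfieldE(1)[OF assms(1)] .
  show ?thesis
    by (intro subalgebra.intro subring.axioms(1)[OF s])
       (unfold subalgebra_axioms_def, use subringE(6)[OF s] assms(2) in blast)
qed

lemma fd_mono:
  assumes k: "subfield k R" and K: "subfield K R" and L: "subfield L R"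
    and kK: "k \<subseteq> K" and KL: "K \<subseteq> L" and fd: "finite_dimension k L"
  shows "finite_dimension K L"
proof -
  obtain Bs where Bs: "set Bs \<subseteq> carrier R" "independent k Bs" "Span k Bs = L"
    using exists_base[OF k finite_dimensionE[OF k fd]] by auto
  have BsL: "set Bs \<subseteq> L" using Span_base_incl[OF k Bs(1)] Bs(3) by auto
  have "Span k Bs \<subseteq> Span K Bs"
  proof
    fix x assume "x \<in> Span k Bs"
    then obtain Ks where Ks: "set Ks \<subseteq> k" "x = combine Ks Bs"
      using Span_eq_combine_set[OF k Bs(1)] by auto
    hence "set Ks \<subseteq> K" using kK by auto
    thus "x \<in> Span K Bs" using Ks(2) Span_eq_combine_set[OF K Bs(1)] by blast
  qed
  moreover have "Span K Bs \<subseteq> L"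
    using subalgebra_Span_incl[OF K subfield_subalgebra[OF L KL] BsL] .
  ultimately have "Span K Bs = L" using Bs(3) by auto
  thus ?thesis using Span_finite_dimension[OF K Bs(1)] by simp
qed

lemma fd_sub:
  assumes k: "subfield k R" and T: "subfield T R" and kT: "k \<subseteq> T" and TL: "T \<subseteq> L"
    and fd: "finite_dimension k L"
  shows "finite_dimension k T"
  using subalbegra_incl_imp_finite_dimension[OF k fd subfield_subalgebra[OF T kT] TL] .

context
  fixes L g m assumes L: "subfield L R" and g: "Lhom R L g" and m: "0 < m"
    and gm: "\<And>x. x \<in> L \<Longrightarrow> (g ^^ m) x = x"
begin

lemma artin_indep:
  assumes ind: "independent {x \<in> L. g x = x} Us" and UsL: "set Us \<subseteq> L"
  shows "length Us \<le> m"
proof (rule ccontr)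
  define K where "K = {x \<in> L. g x = x}"
  have K: "subfield K R" unfolding K_def by (rule fixed_subfield[OF L g])
  define n where "n = length Us"
  assume "\<not> length Us \<le> m"
  hence nm: "card {..<m} < card {..<n}" unfolding n_def by simp
  define a where "a = (\<lambda>j i. (g ^^ j) (Us ! i))"
  have gp: "\<And>j. Lhom R L (g ^^ j)" using Lhom_pow[OF L g] .
  have UL: "\<And>i. i < n \<Longrightarrow> Us ! i \<in> L" using UsL unfolding n_def using nth_mem by blast
  have aL: "\<And>j i. i < n \<Longrightarrow> a j i \<in> L" unfolding a_def using g_L[OF L gp] UL by blast
  have aR: "\<And>j i. i < n \<Longrightarrow> a j i \<in> carrier R" using aL L_car[OF L g] by blast
  have ga: "\<exists>j'<m. \<forall>i<n. a j i = g (a j' i)" if j: "j < m" for j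
  proof (cases j)
    case 0
    have "\<forall>i<n. a j i = g (a (m - 1) i)"
    proof (intro allI impI)
      fix i assume i: "i < n"
      have "(g ^^ m) (Us ! i) = g ((g ^^ (m - 1)) (Us ! i))"
        using m by (metis Suc_diff_1 comp_apply funpow.simps(2))
      thus "a j i = g (a (m - 1) i)" unfolding a_def using gm[OF UL[OF i]] 0 by simp
    qed
    thus ?thesis using m by (intro exI[of _ "m - 1"]) auto
  next
    case (Suc j')
    thus ?thesis using j unfolding a_def by (intro exI[of _ j']) auto
  qed
  define Sol where "Sol = (\<lambda>c. (\<forall>i<n. c i \<in> L) \<and> (\<forall>j<m. (\<Oplus>i\<in>{..<n}. c i \<otimes> a j i) = \<zero>))"
  define supp where "supp = (\<lambda>c. card {i\<in>{..<n}. c i \<noteq> \<zero>})"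
  define Q where "Q = (\<lambda>c. Sol c \<and> (\<exists>i<n. c i \<noteq> \<zero>))"
  obtain c0 where c0: "\<forall>i\<in>{..<n}. c0 i \<in> L" "\<exists>i\<in>{..<n}. c0 i \<noteq> \<zero>"
      "\<forall>j\<in>{..<m}. (\<Oplus>i\<in>{..<n}. c0 i \<otimes> a j i) = \<zero>"
    using hom_system[OF L finite_lessThan finite_lessThan nm, of a] aL by blast
  have "Q c0" unfolding Q_def Sol_def using c0 by auto
  then obtain c where c: "Q c" and cmin: "\<And>d. Q d \<Longrightarrow> supp c \<le> supp d"
    using ex_has_least_nat[of Q c0 supp] by blast
  obtain i0 where i0: "i0 < n" "c i0 \<noteq> \<zero>" using c unfolding Q_def by auto
  have cL: "\<And>i. i < n \<Longrightarrow> c i \<in> L" using c unfolding Q_def Sol_def by auto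
  have cR: "\<And>i. i < n \<Longrightarrow> c i \<in> carrier R" using cL L_car[OF L g] by blast
  define b where "b = inv (c i0)"
  have bL: "b \<in> L" unfolding b_def using L_inv[OF L g cL[OF i0(1)] i0(2)] .
  have bR: "b \<in> carrier R" using bL L_car[OF L g] by blast
  have bnz: "b \<noteq> \<zero>" unfolding b_def using field_inv_nz cR i0 by blast
  define c' where "c' = (\<lambda>i. b \<otimes> c i)"
  have c'L: "\<And>i. i < n \<Longrightarrow> c' i \<in> L" unfolding c'_def using L_mult[OF L g bL cL] by blast
  have c'R: "\<And>i. i < n \<Longrightarrow> c' i \<in> carrier R" using c'L L_car[OF L g] by blast
  have c'i0: "c' i0 = \<one>" unfolding c'_def b_def using i0 cR[OF i0(1)] field_inv_r
    by (metis field_inv_closed m_comm)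
  have c'z: "\<And>i. i < n \<Longrightarrow> c' i = \<zero> \<longleftrightarrow> c i = \<zero>"
    unfolding c'_def using bR bnz cR integral by auto
  have Solc': "Sol c'"
    unfolding Sol_def
  proof (intro conjI allI impI)
    fix i assume "i < n" thus "c' i \<in> L" by (rule c'L)
  next
    fix j assume j: "j < m"
    have "(\<Oplus>i\<in>{..<n}. c' i \<otimes> a j i) = (\<Oplus>i\<in>{..<n}. b \<otimes> (c i \<otimes> a j i))"
    proof (rule finsum_cong')
      show "(\<lambda>i. b \<otimes> (c i \<otimes> a j i)) \<in> {..<n} \<rightarrow> carrier R" using bR cR aR by simp
      show "\<And>i. i \<in> {..<n} \<Longrightarrow> c' i \<otimes> a j i = b \<otimes> (c i \<otimes> a j i)"
        unfolding c'_def using bR cR aR by (simp add: m_assoc)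
    qed simp
    also have "\<dots> = b \<otimes> (\<Oplus>i\<in>{..<n}. c i \<otimes> a j i)"
      using bR cR aR by (subst finsum_rdistr) auto
    also have "\<dots> = \<zero>" using c j bR unfolding Q_def Sol_def by simp
    finally show "(\<Oplus>i\<in>{..<n}. c' i \<otimes> a j i) = \<zero>" .
  qed
  have Solg: "Sol (\<lambda>i. g (c' i))"
    unfolding Sol_def
  proof (intro conjI allI impI)
    fix i assume "i < n" thus "g (c' i) \<in> L" using g_L[OF L g] c'L by blast
  next
    fix j assume j: "j < m"
    obtain j' where j': "j' < m" "\<And>i. i < n \<Longrightarrow> a j i = g (a j' i)" using ga[OF j] by blast
    have "(\<Oplus>i\<in>{..<n}. g (c' i) \<otimes> a j i) = (\<Oplus>i\<in>{..<n}. g (c' i \<otimes> a j' i))"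
    proof (rule finsum_cong')
      show "(\<lambda>i. g (c' i \<otimes> a j' i)) \<in> {..<n} \<rightarrow> carrier R"
        using g_car[OF L g] L_mult[OF L g] c'L aL by simp
      show "\<And>i. i \<in> {..<n} \<Longrightarrow> g (c' i) \<otimes> a j i = g (c' i \<otimes> a j' i)"
        using j' g_mult[OF L g] c'L aL by simp
    qed simp
    also have "\<dots> = g (\<Oplus>i\<in>{..<n}. c' i \<otimes> a j' i)"
      using g_finsum[OF L g, of "{..<n}" "\<lambda>i. c' i \<otimes> a j' i"] L_mult[OF L g] c'L aL by simp
    also have "\<dots> = \<zero>" using Solc' j'(1) g_zero[OF L g] unfolding Sol_def by simp
    finally show "(\<Oplus>i\<in>{..<n}. g (c' i) \<otimes> a j i) = \<zero>" .
  qed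
  define d where "d = (\<lambda>i. c' i \<ominus> g (c' i))"
  have dL: "\<And>i. i < n \<Longrightarrow> d i \<in> L" unfolding d_def using L_minus[OF L g] g_L[OF L g] c'L by blast
  have Sold: "Sol d"
    unfolding Sol_def
  proof (intro conjI allI impI)
    fix i assume "i < n" thus "d i \<in> L" by (rule dL)
  next
    fix j assume j: "j < m"
    have gcR: "\<And>i. i < n \<Longrightarrow> g (c' i) \<in> carrier R" using g_car[OF L g] c'L by blast
    have "(\<Oplus>i\<in>{..<n}. d i \<otimes> a j i) = (\<Oplus>i\<in>{..<n}. c' i \<otimes> a j i \<ominus> g (c' i) \<otimes> a j i)"
    proof (rule finsum_cong')
      show "(\<lambda>i. c' i \<otimes> a j i \<ominus> g (c' i) \<otimes> a j i) \<in> {..<n} \<rightarrow> carrier R"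
        using c'R gcR aR by (simp add: a_minus_def)
      show "\<And>i. i \<in> {..<n} \<Longrightarrow> d i \<otimes> a j i = c' i \<otimes> a j i \<ominus> g (c' i) \<otimes> a j i"
      proof -
        fix i assume "i \<in> {..<n}"
        hence i: "i < n" by simp
        show "d i \<otimes> a j i = c' i \<otimes> a j i \<ominus> g (c' i) \<otimes> a j i"
          unfolding d_def using c'R[OF i] gcR[OF i] aR[OF i] by algebra
      qed
    qed simp
    also have "\<dots> = (\<Oplus>i\<in>{..<n}. c' i \<otimes> a j i) \<ominus> (\<Oplus>i\<in>{..<n}. g (c' i) \<otimes> a j i)"
      using c'R gcR aR by (intro finsum_minus) auto
    also have "\<dots> = \<zero>" using Solc' Solg j unfolding Sol_def by (simp add: a_minus_def)
    finally show "(\<Oplus>i\<in>{..<n}. d i \<otimes> a j i) = \<zero>" .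
  qed
  have di0: "d i0 = \<zero>" unfolding d_def using c'i0 g_one[OF L g] by (simp add: a_minus_def r_neg)
  have dsub: "{i\<in>{..<n}. d i \<noteq> \<zero>} \<subseteq> {i\<in>{..<n}. c i \<noteq> \<zero>} - {i0}"
  proof
    fix i assume i: "i \<in> {i\<in>{..<n}. d i \<noteq> \<zero>}"
    hence "i \<noteq> i0" using di0 by auto
    moreover have "c i \<noteq> \<zero>"
    proof
      assume "c i = \<zero>"
      hence "c' i = \<zero>" using c'z i by auto
      hence "d i = \<zero>" unfolding d_def using g_zero[OF L g] by (simp add: a_minus_def)
      thus False using i by auto
    qed
    ultimately show "i \<in> {i\<in>{..<n}. c i \<noteq> \<zero>} - {i0}" using i by auto
  qed
  have "supp d < supp c"
  proof -
    have "supp d \<le> card ({i\<in>{..<n}. c i \<noteq> \<zero>} - {i0})" unfolding supp_def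
      by (rule card_mono[OF _ dsub]) auto
    also have "\<dots> < supp c" unfolding supp_def
      by (rule card_Diff1_less) (use i0 in auto)
    finally show ?thesis .
  qed
  hence "\<not> Q d" using cmin by fastforce
  hence dz: "\<And>i. i < n \<Longrightarrow> d i = \<zero>" using Sold unfolding Q_def by auto
  have c'K: "\<And>i. i < n \<Longrightarrow> c' i \<in> K"
  proof -
    fix i assume i: "i < n"
    have "c' i \<ominus> g (c' i) = \<zero>" using dz[OF i] unfolding d_def .
    hence "c' i = g (c' i)" using minus_zero_imp_eq[OF c'R[OF i] g_car[OF L g c'L[OF i]]] by simp
    thus "c' i \<in> K" unfolding K_def using c'L[OF i] by simp
  qed
  have "(\<Oplus>i\<in>{..<n}. c' i \<otimes> a 0 i) = \<zero>" using Solc' m unfolding Sol_def by simp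
  moreover have "\<And>i. a 0 i = Us ! i" unfolding a_def by simp
  ultimately have "(\<Oplus>i\<in>{..<length Us}. c' i \<otimes> Us ! i) = \<zero>" unfolding n_def by simp
  hence "\<forall>i<length Us. c' i = \<zero>"
    using indep_finsum_zero[OF K ind[folded K_def]] c'K unfolding n_def by blast
  thus False using c'i0 i0 unfolding n_def by simp
qed

lemma artin_dim:
  assumes fd: "finite_dimension {x \<in> L. g x = x} L"
  shows "dim {x \<in> L. g x = x} L \<le> m"
proof -
  have K: "subfield {x \<in> L. g x = x} R" by (rule fixed_subfield[OF L g])
  obtain Bs where Bs: "set Bs \<subseteq> carrier R" "independent {x \<in> L. g x = x} Bs"
      "length Bs = dim {x \<in> L. g x = x} L" "Span {x \<in> L. g x = x} Bs = L"
    using exists_base[OF K finite_dimensionE[OF K fd]] unfolding over_def by auto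
  have "set Bs \<subseteq> L" using Span_base_incl[OF K Bs(1)] Bs(4) by auto
  thus ?thesis using artin_indep[OF Bs(2)] Bs(3) by simp
qed

end
end


locale cyc = field R for R (structure) +
  fixes k L \<rho>
  assumes k: "subfield k R" and L: "subfield L R" and kL: "k \<subseteq> L" and fd: "finite_dimension k L"
    and rho: "Lhom R L \<rho>" and rho_k: "\<And>x. x \<in> k \<Longrightarrow> \<rho> x = x"
    and fixk: "{x \<in> L. \<rho> x = x} = k"
begin

abbreviation "dd \<equiv> dim k L"

lemma rp: "Lhom R L (\<rho> ^^ n)" using Lhom_pow[OF L rho] .
lemma rp_L: "x \<in> L \<Longrightarrow> (\<rho> ^^ n) x \<in> L" using g_L[OF L rp] .
lemma rp_car: "x \<in> L \<Longrightarrow> (\<rho> ^^ n) x \<in> carrier R" using g_car[OF L rp] .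
lemma rp_add: "x \<in> L \<Longrightarrow> y \<in> L \<Longrightarrow> (\<rho> ^^ n) (x \<oplus> y) = (\<rho> ^^ n) x \<oplus> (\<rho> ^^ n) y" using g_add[OF L rp] .
lemma rp_mult: "x \<in> L \<Longrightarrow> y \<in> L \<Longrightarrow> (\<rho> ^^ n) (x \<otimes> y) = (\<rho> ^^ n) x \<otimes> (\<rho> ^^ n) y" using g_mult[OF L rp] .
lemma rp_inj: "x \<in> L \<Longrightarrow> y \<in> L \<Longrightarrow> (\<rho> ^^ n) x = (\<rho> ^^ n) y \<Longrightarrow> x = y" using g_inj[OF L rp] .
lemma rp_k: "x \<in> k \<Longrightarrow> (\<rho> ^^ n) x = x" by (induct n) (auto simp: rho_k)
lemma rp_exp_add: "(\<rho> ^^ (a + b)) x = (\<rho> ^^ a) ((\<rho> ^^ b) x)" by (simp add: funpow_add)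

lemma rp_fix_mult: "(\<rho> ^^ a) x = x \<Longrightarrow> (\<rho> ^^ (a * q)) x = x"
proof (induct q)
  case 0 then show ?case by simp
next
  case (Suc q)
  have "(\<rho> ^^ (a * Suc q)) x = (\<rho> ^^ a) ((\<rho> ^^ (a * q)) x)" by (simp add: rp_exp_add[symmetric])
  thus ?case using Suc by simp
qed

lemma rp_diff:
  assumes "i < j" "T \<subseteq> L" "\<forall>x\<in>T. (\<rho> ^^ i) x = (\<rho> ^^ j) x"
  shows "\<forall>x\<in>T. (\<rho> ^^ (j - i)) x = x"
proof
  fix x assume x: "x \<in> T"
  have xL: "x \<in> L" using x assms(2) by auto
  have "(\<rho> ^^ i) ((\<rho> ^^ (j - i)) x) = (\<rho> ^^ j) x" using assms(1) rp_exp_add[of i "j - i" x] by simp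
  also have "\<dots> = (\<rho> ^^ i) x" using assms(3) x by simp
  finally show "(\<rho> ^^ (j - i)) x = x" using rp_inj[OF rp_L[OF xL] xL] by blast
qed

lemma kR: "k \<subseteq> carrier R" using subfieldE(3)[OF k] .
lemma one_k: "\<one> \<in> k" using subringE(3)[OF subfieldE(1)[OF k]] .

lemma order_exists: "\<exists>m. 0 < m \<and> (\<forall>x\<in>L. (\<rho> ^^ m) x = x)"
proof (rule ccontr)
  assume na: "\<not> (\<exists>m. 0 < m \<and> (\<forall>x\<in>L. (\<rho> ^^ m) x = x))"
  have dist: "\<exists>x\<in>L. (\<rho> ^^ i) x \<noteq> (\<rho> ^^ j) x" if "i \<noteq> j" for i j
  proof (rule ccontr)
    assume "\<not> (\<exists>x\<in>L. (\<rho> ^^ i) x \<noteq> (\<rho> ^^ j) x)"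
    hence eq: "\<forall>x\<in>L. (\<rho> ^^ i) x = (\<rho> ^^ j) x" by auto
    show False
    proof (cases "i < j")
      case True
      have "0 < j - i" using True by simp
      thus False using rp_diff[OF True subset_refl eq] na by blast
    next
      case False
      hence "j < i" using that by auto
      have "0 < i - j" using \<open>j < i\<close> by simp
      moreover have "\<forall>x\<in>L. (\<rho> ^^ j) x = (\<rho> ^^ i) x" using eq by simp
      ultimately show False using rp_diff[OF \<open>j < i\<close> subset_refl] na by blast
    qed
  qed
  have "card {..dd} \<le> dd"
    by (rule dedekind_bound[OF k L kL fd, of "{..dd}" "\<lambda>i. \<rho> ^^ i"])
       (auto simp: rp_car rp_add rp_mult rp_k dist)
  thus False by simp
qed

definition "ord = (LEAST m. 0 < m \<and> (\<forall>x\<in>L. (\<rho> ^^ m) x = x))"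

lemma ord_props: "0 < ord" "\<forall>x\<in>L. (\<rho> ^^ ord) x = x"
  using LeastI_ex[OF order_exists] unfolding ord_def by auto

lemma ord_min: "0 < n \<Longrightarrow> n < ord \<Longrightarrow> \<exists>x\<in>L. (\<rho> ^^ n) x \<noteq> x"
  using not_less_Least[of n "\<lambda>m. 0 < m \<and> (\<forall>x\<in>L. (\<rho> ^^ m) x = x)"] unfolding ord_def by auto

lemma ord_dist: "i < ord \<Longrightarrow> j < ord \<Longrightarrow> i \<noteq> j \<Longrightarrow> \<exists>x\<in>L. (\<rho> ^^ i) x \<noteq> (\<rho> ^^ j) x"
proof -
  have aux: "\<exists>x\<in>L. (\<rho> ^^ i) x \<noteq> (\<rho> ^^ j) x" if "i < j" "j < ord" for i j
  proof (rule ccontr)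
    assume "\<not> (\<exists>x\<in>L. (\<rho> ^^ i) x \<noteq> (\<rho> ^^ j) x)"
    hence "\<forall>x\<in>L. (\<rho> ^^ (j - i)) x = x" using rp_diff[OF that(1) subset_refl] by auto
    moreover have "0 < j - i" "j - i < ord" using that by auto
    ultimately show False using ord_min[of "j - i"] by blast
  qed
  assume "i < ord" "j < ord" "i \<noteq> j"
  thus ?thesis using aux[of i j] aux[of j i] by (cases "i < j") (auto, metis)
qed

lemma ord_le: "ord \<le> dd"
  using dedekind_bound[OF k L kL fd, of "{..<ord}" "\<lambda>i. \<rho> ^^ i"]
  by (auto simp: rp_car rp_add rp_mult rp_k ord_dist)

lemma dd_le: "dd \<le> ord"
  using artin_dim[OF L rho ord_props(1)] ord_props(2) fixk fd by auto

lemma ord_eq: "ord = dd" using ord_le dd_le by simp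

lemma dd_pos: "0 < dd" using ord_props(1) ord_eq by simp
lemma rho_dd: "x \<in> L \<Longrightarrow> (\<rho> ^^ dd) x = x" using ord_props(2) ord_eq by auto
lemma rp_dist: "i < dd \<Longrightarrow> j < dd \<Longrightarrow> i \<noteq> j \<Longrightarrow> \<exists>x\<in>L. (\<rho> ^^ i) x \<noteq> (\<rho> ^^ j) x"
  using ord_dist ord_eq by auto

lemma dim_mono:
  assumes K: "subfield K R" and fF: "finite_dimension K F" and fE: "finite_dimension K E" and EF: "E \<subseteq> F"
  shows "dim K E \<le> dim K F"
proof -
  obtain Bs where Bs: "set Bs \<subseteq> carrier R" "independent K Bs" "length Bs = dim K E" "Span K Bs = E"
    using exists_base[OF K finite_dimensionE[OF K fE]] unfolding over_def by auto
  have "set Bs \<subseteq> F" using Span_base_incl[OF K Bs(1)] Bs(4) EF by auto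
  thus ?thesis using independent_length_le_dimension[OF K finite_dimensionE[OF K fF] Bs(2)] Bs(3)
    unfolding over_def by simp
qed

lemma dim_eq_sub:
  assumes K: "subfield K R" and fF: "finite_dimension K F" and fE: "finite_dimension K E" and EF: "E \<subseteq> F"
    and eq: "dim K E = dim K F"
  shows "E = F"
proof -
  obtain Bs where Bs: "set Bs \<subseteq> carrier R" "independent K Bs" "length Bs = dim K E" "Span K Bs = E"
    using exists_base[OF K finite_dimensionE[OF K fE]] unfolding over_def by auto
  have "set Bs \<subseteq> F" using Span_base_incl[OF K Bs(1)] Bs(4) EF by auto
  hence "Span K Bs = F"
    using independent_length_eq_dimension[OF K finite_dimensionE[OF K fF] Bs(2)] Bs(3) eq
    unfolding over_def by simp
  thus ?thesis using Bs(4) by simp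
qed

definition Phi :: "nat \<Rightarrow> 'a set" where "Phi t = {x \<in> L. (\<rho> ^^ t) x = x}"

lemma Phi_subfield: "subfield (Phi t) R" unfolding Phi_def by (rule fixed_subfield[OF L rp])
lemma Phi_k: "k \<subseteq> Phi t" unfolding Phi_def using kL rp_k by auto
lemma Phi_L: "Phi t \<subseteq> L" unfolding Phi_def by auto

lemma interm_props:
  assumes T: "subfield T R" and kT: "k \<subseteq> T" and TL: "T \<subseteq> L"
  shows "dim k T dvd dd" "T = Phi (dim k T)"
    "\<And>n. 0 < n \<Longrightarrow> \<forall>x\<in>T. (\<rho> ^^ n) x = x \<Longrightarrow> dim k T \<le> n"
proof -
  define P where "P = (\<lambda>n. 0 < n \<and> (\<forall>x\<in>T. (\<rho> ^^ n) x = x))"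
  have Pdd: "P dd" unfolding P_def using dd_pos rho_dd TL by auto
  define e' where "e' = (LEAST n. P n)"
  have Pe': "P e'" unfolding e'_def using LeastI[of P, OF Pdd] .
  have e'min: "\<And>n. P n \<Longrightarrow> e' \<le> n" unfolding e'_def by (rule Least_le)
  have e'pos: "0 < e'" using Pe' unfolding P_def by auto
  have e'fix: "\<And>x. x \<in> T \<Longrightarrow> (\<rho> ^^ e') x = x" using Pe' unfolding P_def by auto
  have e'dvd: "e' dvd dd"
  proof -
    define r where "r = dd mod e'"
    define q where "q = dd div e'"
    have ddeq: "dd = r + e' * q" unfolding r_def q_def by simp
    have "\<forall>x\<in>T. (\<rho> ^^ r) x = x"
    proof
      fix x assume x: "x \<in> T"
      have "(\<rho> ^^ dd) x = (\<rho> ^^ r) ((\<rho> ^^ (e' * q)) x)" using ddeq rp_exp_add by metis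
      also have "(\<rho> ^^ (e' * q)) x = x" using rp_fix_mult e'fix x by blast
      finally show "(\<rho> ^^ r) x = x" using rho_dd x TL by auto
    qed
    moreover have "r < e'" unfolding r_def using e'pos by simp
    ultimately have "r = 0" using e'min unfolding P_def by fastforce
    thus ?thesis unfolding r_def by auto
  qed
  have fdT: "finite_dimension k T" using fd_sub[OF k T kT TL fd] .
  have a: "e' \<le> dim k T"
  proof -
    have dist: "\<exists>x\<in>T. (\<rho> ^^ i) x \<noteq> (\<rho> ^^ j) x" if "i < e'" "j < e'" "i \<noteq> j" for i j
    proof -
      have aux: "\<exists>x\<in>T. (\<rho> ^^ i) x \<noteq> (\<rho> ^^ j) x" if "i < j" "j < e'" for i j
      proof (rule ccontr)
        assume "\<not> (\<exists>x\<in>T. (\<rho> ^^ i) x \<noteq> (\<rho> ^^ j) x)"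
        hence "\<forall>x\<in>T. (\<rho> ^^ (j - i)) x = x" using rp_diff[OF that(1) TL] by auto
        hence "P (j - i)" unfolding P_def using that by auto
        thus False using e'min[of "j - i"] that by auto
      qed
      show ?thesis using aux[of i j] aux[of j i] that by (cases "i < j") (auto, metis)
    qed
    show ?thesis
      using dedekind_bound[OF k T kT fdT, of "{..<e'}" "\<lambda>i. \<rho> ^^ i"] TL dist
      by (auto simp: rp_car rp_add rp_mult rp_k subset_iff)
  qed
  define K' where "K' = Phi e'"
  have K': "subfield K' R" unfolding K'_def by (rule Phi_subfield)
  have kK': "k \<subseteq> K'" unfolding K'_def by (rule Phi_k)
  have K'L: "K' \<subseteq> L" unfolding K'_def by (rule Phi_L)
  have TK': "T \<subseteq> K'" unfolding K'_def Phi_def using TL e'fix by auto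
  have fdK'L: "finite_dimension K' L" using fd_mono[OF k K' L kK' K'L fd] .
  have fdkK': "finite_dimension k K'" using fd_sub[OF k K' kK' K'L fd] .
  have b: "dd div e' \<le> dim K' L"
  proof -
    have fixK': "\<And>j x. x \<in> K' \<Longrightarrow> (\<rho> ^^ (e' * j)) x = x"
      using rp_fix_mult unfolding K'_def Phi_def by auto
    have dist: "\<exists>x\<in>L. (\<rho> ^^ (e' * i)) x \<noteq> (\<rho> ^^ (e' * j)) x"
      if "i < dd div e'" "j < dd div e'" "i \<noteq> j" for i j
    proof -
      have "e' * i < dd" "e' * j < dd" using that e'dvd e'pos
        by (metis dvd_mult_div_cancel mult_less_mono2)+
      moreover have "e' * i \<noteq> e' * j" using that e'pos by simp
      ultimately show ?thesis using rp_dist by blast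
    qed
    show ?thesis
      using dedekind_bound[OF K' L K'L fdK'L, of "{..<dd div e'}" "\<lambda>j. \<rho> ^^ (e' * j)"] dist fixK'
      by (auto simp: rp_car rp_add rp_mult)
  qed
  have c: "dd = dim k K' * dim K' L"
    using telescopic_base_dim(2)[OF k K' fdkK' fdK'L] unfolding over_def by simp
  have d: "dim k T \<le> dim k K'" using dim_mono[OF k fdkK' fdT TK'] .
  have "dim k K' \<le> e'"
  proof -
    have q: "0 < dd div e'" using e'dvd e'pos dd_pos by (metis dvd_div_eq_0_iff gr0I less_not_refl2)
    have "dim k K' * (dd div e') \<le> dim k K' * dim K' L" using b by simp
    also have "\<dots> = e' * (dd div e')" using c e'dvd by simp
    finally show ?thesis using q by simp
  qed
  hence eqs: "dim k T = e'" "dim k K' = e'" using a d by auto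
  have TeqK': "T = K'" using dim_eq_sub[OF k fdkK' fdT TK'] eqs by simp
  show "dim k T dvd dd" using eqs e'dvd by simp
  show "T = Phi (dim k T)" using TeqK' eqs unfolding K'_def by simp
  show "\<And>n. 0 < n \<Longrightarrow> \<forall>x\<in>T. (\<rho> ^^ n) x = x \<Longrightarrow> dim k T \<le> n"
    using e'min eqs unfolding P_def by auto
qed

lemma Phi_dim:
  assumes t: "t dvd dd" shows "dim k (Phi t) = t"
proof -
  have tpos: "0 < t" using t dd_pos by (metis dvd_0_left_iff gr0I less_not_refl)
  define T where "T = Phi t"
  have T: "subfield T R" "k \<subseteq> T" "T \<subseteq> L" unfolding T_def using Phi_subfield Phi_k Phi_L by auto
  have le1: "dim k T \<le> t" using interm_props(3)[OF T tpos] unfolding T_def Phi_def by auto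
  have fdTL: "finite_dimension T L" using fd_mono[OF k T(1) L T(2,3) fd] .
  have fdkT: "finite_dimension k T" using fd_sub[OF k T(1,2,3) fd] .
  have qpos: "0 < dd div t" using t tpos dd_pos by (metis dvd_div_eq_0_iff gr0I less_not_refl2)
  have gm: "\<And>x. x \<in> L \<Longrightarrow> ((\<rho> ^^ t) ^^ (dd div t)) x = x"
    using rho_dd t by (simp add: funpow_mult)
  have "dim {x \<in> L. (\<rho> ^^ t) x = x} L \<le> dd div t"
    using artin_dim[OF L rp qpos gm] fdTL unfolding T_def Phi_def by blast
  hence le2: "dim T L \<le> dd div t" unfolding T_def Phi_def .
  have "dd = dim k T * dim T L"
    using telescopic_base_dim(2)[OF k T(1) fdkT fdTL] unfolding over_def by simp
  also have "\<dots> \<le> dim k T * (dd div t)" using le2 by simp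
  finally have "t * (dd div t) \<le> dim k T * (dd div t)" using t by simp
  hence "t \<le> dim k T" using qpos by simp
  thus ?thesis using le1 unfolding T_def by simp
qed

lemma sub_iff_dvd:
  assumes T: "subfield T R" "k \<subseteq> T" "T \<subseteq> L" and U: "subfield U R" "k \<subseteq> U" "U \<subseteq> L"
  shows "T \<subseteq> U \<longleftrightarrow> dim k T dvd dim k U"
proof
  assume TU: "T \<subseteq> U"
  have fdkT: "finite_dimension k T" using fd_sub[OF k T fd] .
  have fdTU: "finite_dimension T U" using fd_mono[OF k T(1) U(1) T(2) TU fd_sub[OF k U fd]] .
  have "dim k U = dim k T * dim T U"
    using telescopic_base_dim(2)[OF k T(1) fdkT fdTU] unfolding over_def by simp
  thus "dim k T dvd dim k U" by simp
next
  assume dv: "dim k T dvd dim k U"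
  then obtain q where q: "dim k U = dim k T * q" by auto
  have "Phi (dim k T) \<subseteq> Phi (dim k U)" unfolding Phi_def q using rp_fix_mult by auto
  thus "T \<subseteq> U" using interm_props(2)[OF T] interm_props(2)[OF U] by simp
qed

end


definition num :: "nat set \<Rightarrow> (nat \<Rightarrow> nat) \<Rightarrow> nat" where
  "num P \<gamma> = (\<Prod>p\<in>P. p ^ \<gamma> p)"

lemma num_pos: "finite P \<Longrightarrow> (\<And>p. p \<in> P \<Longrightarrow> Factorial_Ring.prime p) \<Longrightarrow> 0 < num P \<gamma>"
  unfolding num_def by (intro prod_pos) (auto simp: prime_gt_0_nat)

lemma num_mult: "finite P \<Longrightarrow> (\<And>p. p \<in> P \<Longrightarrow> Factorial_Ring.prime p) \<Longrightarrow> Factorial_Ring.prime q \<Longrightarrow>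
   multiplicity q (num P \<gamma>) = (if q \<in> P then \<gamma> q else 0)"
  unfolding num_def by (rule multiplicity_prod_prime_powers)

lemma num_dvd_iff:
  assumes "finite P" "\<And>p. p \<in> P \<Longrightarrow> Factorial_Ring.prime p"
  shows "num P \<gamma> dvd num P \<delta> \<longleftrightarrow> (\<forall>p\<in>P. \<gamma> p \<le> \<delta> p)"
proof
  assume h: "num P \<gamma> dvd num P \<delta>"
  show "\<forall>p\<in>P. \<gamma> p \<le> \<delta> p"
  proof
    fix p assume p: "p \<in> P"
    have "multiplicity p (num P \<gamma>) \<le> multiplicity p (num P \<delta>)"
      using dvd_imp_multiplicity_le[OF h] num_pos[OF assms, of \<delta>] by simp
    thus "\<gamma> p \<le> \<delta> p" using num_mult[OF assms] assms(2)[OF p] p by simp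
  qed
next
  assume h: "\<forall>p\<in>P. \<gamma> p \<le> \<delta> p"
  show "num P \<gamma> dvd num P \<delta>"
  proof (rule multiplicity_le_imp_dvd)
    show "num P \<gamma> \<noteq> 0" using num_pos[OF assms, of \<gamma>] by simp
    fix q :: nat assume "Factorial_Ring.prime q"
    thus "multiplicity q (num P \<gamma>) \<le> multiplicity q (num P \<delta>)"
      using num_mult[OF assms] h by simp
  qed
qed

lemma num_eq_iff:
  assumes "finite P" "\<And>p. p \<in> P \<Longrightarrow> Factorial_Ring.prime p"
  shows "num P \<gamma> = num P \<delta> \<longleftrightarrow> (\<forall>p\<in>P. \<gamma> p = \<delta> p)"
proof
  assume "num P \<gamma> = num P \<delta>"
  hence "num P \<gamma> dvd num P \<delta>" "num P \<delta> dvd num P \<gamma>" by auto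
  thus "\<forall>p\<in>P. \<gamma> p = \<delta> p" using num_dvd_iff[OF assms] by (auto intro: antisym)
next
  assume "\<forall>p\<in>P. \<gamma> p = \<delta> p"
  thus "num P \<gamma> = num P \<delta>" unfolding num_def by (intro prod.cong) auto
qed

lemma num_cong: "(\<And>p. p \<in> P \<Longrightarrow> \<gamma> p = \<delta> p) \<Longrightarrow> num P \<gamma> = num P \<delta>"
  unfolding num_def by (intro prod.cong) auto

context
  fixes r :: nat assumes r: "0 < r"
begin

lemma fP: "finite (prime_factors r)" by simp
lemma pP: "p \<in> prime_factors r \<Longrightarrow> Factorial_Ring.prime p" by auto

lemma dvd_r_num:
  assumes t: "t dvd r" shows "t = num (prime_factors r) (\<lambda>p. multiplicity p t)"
proof -
  have t0: "t \<noteq> 0" using t r by auto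
  have sub: "prime_factors t \<subseteq> prime_factors r" using t r by (intro dvd_prime_factors) auto
  have "t = (\<Prod>p\<in>prime_factors t. p ^ multiplicity p t)" using prod_prime_factors[OF t0] by simp
  also have "\<dots> = (\<Prod>p\<in>prime_factors r. p ^ multiplicity p t)"
  proof (rule prod.mono_neutral_left[OF fP sub])
    show "\<forall>i\<in>prime_factors r - prime_factors t. i ^ multiplicity i t = 1"
    proof
      fix i assume i: "i \<in> prime_factors r - prime_factors t"
      hence "\<not> i dvd t" using t0 pP[of i] by (auto simp: in_prime_factors_iff)
      hence "multiplicity i t = 0" by (rule not_dvd_imp_multiplicity_0)
      thus "i ^ multiplicity i t = 1" by simp
    qed
  qed
  finally show ?thesis unfolding num_def .
qed

lemma r_num: "r = num (prime_factors r) (\<lambda>p. multiplicity p r)"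
  using dvd_r_num[of r] by simp

lemma num_dvd_r:
  "(\<forall>p\<in>prime_factors r. \<gamma> p \<le> multiplicity p r) \<Longrightarrow> num (prime_factors r) \<gamma> dvd r"
  using num_dvd_iff[OF fP pP, of \<gamma> "\<lambda>p. multiplicity p r"] r_num by simp

lemma dvd_r_le: "t dvd r \<Longrightarrow> multiplicity p t \<le> multiplicity p r"
  using dvd_imp_multiplicity_le r by auto

lemma num_mult_P: "p \<in> prime_factors r \<Longrightarrow> multiplicity p (num (prime_factors r) \<gamma>) = \<gamma> p"
  using num_mult[OF fP pP pP] by simp

end


context cyc
begin

abbreviation "PP \<equiv> prime_factors dd"
abbreviation "al \<equiv> (\<lambda>p. multiplicity p dd)"
abbreviation "IF \<equiv> {T. subfield T R \<and> k \<subseteq> T \<and> T \<subseteq> L}"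
definition "VV = {\<gamma>. (\<forall>p. p \<notin> PP \<longrightarrow> \<gamma> p = 0) \<and> (\<forall>p\<in>PP. \<gamma> p \<le> al p)}"
definition "vec T = (\<lambda>p. if p \<in> PP then multiplicity p (dim k T) else 0)"
definition "fld \<gamma> = Phi (num PP \<gamma>)"

lemma fPP: "finite PP" by simp
lemma pPP: "p \<in> PP \<Longrightarrow> Factorial_Ring.prime p" by auto

lemma IF_dvd: "T \<in> IF \<Longrightarrow> dim k T dvd dd" using interm_props(1) by auto

lemma vec_V: "T \<in> IF \<Longrightarrow> vec T \<in> VV"
  unfolding VV_def vec_def using dvd_r_le[OF dd_pos IF_dvd] by auto

lemma deg_num: "T \<in> IF \<Longrightarrow> dim k T = num PP (vec T)"
proof -
  assume T: "T \<in> IF"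
  have "dim k T = num PP (\<lambda>p. multiplicity p (dim k T))" using dvd_r_num[OF dd_pos IF_dvd[OF T]] .
  also have "\<dots> = num PP (vec T)" unfolding vec_def by (rule num_cong) auto
  finally show ?thesis .
qed

lemma num_dvd_dd: "\<gamma> \<in> VV \<Longrightarrow> num PP \<gamma> dvd dd" unfolding VV_def using num_dvd_r[OF dd_pos] by auto

lemma fld_IF: "fld \<gamma> \<in> IF" unfolding fld_def using Phi_subfield Phi_k Phi_L by auto

lemma dim_fld: "\<gamma> \<in> VV \<Longrightarrow> dim k (fld \<gamma>) = num PP \<gamma>"
  unfolding fld_def using Phi_dim num_dvd_dd by auto

lemma vec_fld: "\<gamma> \<in> VV \<Longrightarrow> vec (fld \<gamma>) = \<gamma>"
proof
  fix p assume g: "\<gamma> \<in> VV"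
  show "vec (fld \<gamma>) p = \<gamma> p"
    unfolding vec_def dim_fld[OF g] using num_mult_P[OF dd_pos] g unfolding VV_def by auto
qed

lemma fld_vec: "T \<in> IF \<Longrightarrow> fld (vec T) = T"
  unfolding fld_def using interm_props(2)[of T] deg_num by auto

lemma le_iff_P: "\<gamma> \<in> VV \<Longrightarrow> \<delta> \<in> VV \<Longrightarrow> \<gamma> \<le> \<delta> \<longleftrightarrow> (\<forall>p\<in>PP. \<gamma> p \<le> \<delta> p)"
proof -
  assume g: "\<gamma> \<in> VV" and d: "\<delta> \<in> VV"
  have "(\<forall>p\<in>PP. \<gamma> p \<le> \<delta> p) \<Longrightarrow> \<gamma> p \<le> \<delta> p" for p
    using g d unfolding VV_def by (cases "p \<in> PP") auto
  thus ?thesis by (auto simp: le_fun_def)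
qed

lemma le_iff_dvd: "\<gamma> \<in> VV \<Longrightarrow> \<delta> \<in> VV \<Longrightarrow> \<gamma> \<le> \<delta> \<longleftrightarrow> num PP \<gamma> dvd num PP \<delta>"
  using le_iff_P num_dvd_iff[OF fPP pPP] by simp

lemma sub_iff: "T \<in> IF \<Longrightarrow> U \<in> IF \<Longrightarrow> T \<subseteq> U \<longleftrightarrow> vec T \<le> vec U"
  using sub_iff_dvd[of T U] deg_num le_iff_dvd vec_V by auto

lemma vec_inj: "T \<in> IF \<Longrightarrow> U \<in> IF \<Longrightarrow> vec T = vec U \<Longrightarrow> T = U"
proof -
  assume T: "T \<in> IF" and U: "U \<in> IF" and e: "vec T = vec U"
  have "T = fld (vec T)" using fld_vec[OF T] by simp
  also have "\<dots> = fld (vec U)" using e by simp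
  also have "\<dots> = U" using fld_vec[OF U] .
  finally show ?thesis .
qed

lemma fld_inj: "\<gamma> \<in> VV \<Longrightarrow> \<delta> \<in> VV \<Longrightarrow> fld \<gamma> = fld \<delta> \<Longrightarrow> \<gamma> = \<delta>"
proof -
  assume g: "\<gamma> \<in> VV" and d: "\<delta> \<in> VV" and e: "fld \<gamma> = fld \<delta>"
  have "\<gamma> = vec (fld \<gamma>)" using vec_fld[OF g] by simp
  also have "\<dots> = vec (fld \<delta>)" using e by simp
  also have "\<dots> = \<delta>" using vec_fld[OF d] .
  finally show ?thesis .
qed

lemma fld_mono: "\<gamma> \<in> VV \<Longrightarrow> \<delta> \<in> VV \<Longrightarrow> fld \<gamma> \<subseteq> fld \<delta> \<longleftrightarrow> \<gamma> \<le> \<delta>"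
  using sub_iff[OF fld_IF fld_IF] vec_fld by simp

lemma k_IF: "k \<in> IF" using cyc_axioms unfolding cyc_def cyc_axioms_def by auto
lemma L_IF: "L \<in> IF" using cyc_axioms unfolding cyc_def cyc_axioms_def by auto

lemma dim_kk: "dim k k = 1" using dimI[OF k dimension_one[OF k]] unfolding over_def .

lemma vec_k: "vec k = (\<lambda>_. 0)" unfolding vec_def dim_kk by auto

lemma vec_L: "vec L = (\<lambda>p. if p \<in> PP then al p else 0)" unfolding vec_def by simp

lemma deg_eq_prod: "T \<in> IF \<Longrightarrow> dim k T = (\<Prod>p\<in>PP. p ^ \<gamma> p) \<longleftrightarrow> (\<forall>p\<in>PP. vec T p = \<gamma> p)"
proof -
  assume T: "T \<in> IF"
  have "dim k T = (\<Prod>p\<in>PP. p ^ \<gamma> p) \<longleftrightarrow> num PP (vec T) = num PP \<gamma>"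
    using deg_num[OF T] unfolding num_def by simp
  also have "\<dots> \<longleftrightarrow> (\<forall>p\<in>PP. vec T p = \<gamma> p)" by (rule num_eq_iff[OF fPP pPP])
  finally show ?thesis .
qed

lemma subfield_inter:
  assumes "subfield T R" "subfield U R" shows "subfield (T \<inter> U) R"
proof (rule subfieldI')
  show "subring (T \<inter> U) R" using subring_inter subfieldE(1) assms by blast
  show "\<And>x. x \<in> T \<inter> U - {\<zero>} \<Longrightarrow> inv x \<in> T \<inter> U"
    using subfield_m_inv(1)[OF assms(1)] subfield_m_inv(1)[OF assms(2)] by blast
qed

lemma inter_IF: "T \<in> IF \<Longrightarrow> U \<in> IF \<Longrightarrow> T \<inter> U \<in> IF"
  using subfield_inter by auto

lemma V_min: "\<gamma> \<in> VV \<Longrightarrow> \<delta> \<in> VV \<Longrightarrow> (\<lambda>p. min (\<gamma> p) (\<delta> p)) \<in> VV"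
  unfolding VV_def by auto
lemma V_max: "\<gamma> \<in> VV \<Longrightarrow> \<delta> \<in> VV \<Longrightarrow> (\<lambda>p. max (\<gamma> p) (\<delta> p)) \<in> VV"
  unfolding VV_def by auto

lemma vec_inter: "T \<in> IF \<Longrightarrow> U \<in> IF \<Longrightarrow> vec (T \<inter> U) = (\<lambda>p. min (vec T p) (vec U p))"
proof -
  assume T: "T \<in> IF" and U: "U \<in> IF"
  define m where "m = (\<lambda>p. min (vec T p) (vec U p))"
  have mV: "m \<in> VV" unfolding m_def using V_min vec_V T U by auto
  have "fld m \<subseteq> T" "fld m \<subseteq> U"
    using sub_iff[OF fld_IF T] sub_iff[OF fld_IF U] vec_fld[OF mV] unfolding m_def
    by (auto simp: le_fun_def)
  hence "fld m \<subseteq> T \<inter> U" by auto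
  hence 1: "m \<le> vec (T \<inter> U)" using sub_iff[OF fld_IF inter_IF[OF T U]] vec_fld[OF mV] by simp
  have "vec (T \<inter> U) \<le> vec T" "vec (T \<inter> U) \<le> vec U"
    using sub_iff[OF inter_IF[OF T U] T] sub_iff[OF inter_IF[OF T U] U] by auto
  hence "vec (T \<inter> U) \<le> m" unfolding m_def by (auto simp: le_fun_def)
  thus ?thesis using 1 unfolding m_def by (simp add: antisym)
qed

lemma gen_IF:
  assumes "H \<subseteq> L" "k \<subseteq> H" shows "generate_field R H \<in> IF"
proof -
  have HR: "H \<subseteq> carrier R" using assms L_car[OF L rho] by auto
  have "subfield (generate_field R H) R" using generate_field_is_subfield[OF HR] .
  moreover have "H \<subseteq> generate_field R H" using generate_fieldE(2)[OF HR refl] .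
  moreover have "generate_field R H \<subseteq> L" using generate_field_min_subfield1[OF HR L assms(1)] .
  ultimately show ?thesis using assms by auto
qed

lemma gen_le:
  assumes "H \<subseteq> L" "W \<in> IF" shows "generate_field R H \<subseteq> W \<longleftrightarrow> H \<subseteq> W"
proof -
  have HR: "H \<subseteq> carrier R" using assms L_car[OF L rho] by auto
  show ?thesis
    using generate_field_min_subfield1[OF HR, of W] generate_fieldE(2)[OF HR refl] assms(2) by auto
qed

lemma gen_incl: "H \<subseteq> L \<Longrightarrow> H \<subseteq> generate_field R H"
  using generate_fieldE(2)[OF _ refl] L_car[OF L rho] by blast

lemma comp_IF: "T \<in> IF \<Longrightarrow> U \<in> IF \<Longrightarrow> compositum R T U \<in> IF"
  unfolding compositum_def by (rule gen_IF) auto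

lemma vec_comp: "T \<in> IF \<Longrightarrow> U \<in> IF \<Longrightarrow> vec (compositum R T U) = (\<lambda>p. max (vec T p) (vec U p))"
proof -
  assume T: "T \<in> IF" and U: "U \<in> IF"
  define m where "m = (\<lambda>p. max (vec T p) (vec U p))"
  have mV: "m \<in> VV" unfolding m_def using V_max vec_V T U by auto
  have C: "compositum R T U \<in> IF" using comp_IF[OF T U] .
  have "T \<subseteq> fld m" "U \<subseteq> fld m"
    using sub_iff[OF T fld_IF] sub_iff[OF U fld_IF] vec_fld[OF mV] unfolding m_def
    by (auto simp: le_fun_def)
  hence "compositum R T U \<subseteq> fld m" unfolding compositum_def using gen_le[OF _ fld_IF] T U by auto
  hence 1: "vec (compositum R T U) \<le> m" using sub_iff[OF C fld_IF] vec_fld[OF mV] by simp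
  have "T \<subseteq> compositum R T U" "U \<subseteq> compositum R T U"
    unfolding compositum_def using gen_incl[of "T \<union> U"] T U by auto
  hence "vec T \<le> vec (compositum R T U)" "vec U \<le> vec (compositum R T U)"
    using sub_iff[OF T C] sub_iff[OF U C] by auto
  hence "m \<le> vec (compositum R T U)" unfolding m_def by (auto simp: le_fun_def)
  thus ?thesis using 1 unfolding m_def by (simp add: antisym)
qed

lemma interm_eq: "interm R k L = IF" unfolding interm_def by simp

lemma interm_sub: "S \<in> IF \<Longrightarrow> interm R S T \<subseteq> IF \<or> \<not> T \<subseteq> L" unfolding interm_def by auto

lemma minimal_ext_iff:
  assumes S: "S \<in> IF" and TL: "T \<subseteq> L"
  shows "minimal_ext R S T \<longleftrightarrow> T \<in> IF \<and> (\<exists>p\<in>PP. vec T = (vec S)(p := vec S p + 1))"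
proof
  assume m: "minimal_ext R S T"
  hence ST: "S \<subset> T" and iST: "interm R S T = {S, T}" unfolding minimal_ext_def by auto
  have "T \<in> interm R S T" using iST by auto
  hence T: "T \<in> IF" using S TL unfolding interm_def by auto
  have le: "vec S \<le> vec T" using sub_iff[OF S T] ST by auto
  have ne: "vec S \<noteq> vec T" using vec_inj[OF S T] ST by auto
  then obtain p where p: "vec S p \<noteq> vec T p" by auto
  hence pl: "vec S p < vec T p" using le by (simp add: le_fun_def order_le_neq_trans)
  have pP: "p \<in> PP" using pl unfolding vec_def by (auto split: if_splits)
  define \<gamma> where "\<gamma> = (vec S)(p := vec S p + 1)"
  have gV: "\<gamma> \<in> VV" using vec_V[OF T] vec_V[OF S] pl pP unfolding \<gamma>_def VV_def by auto
  have "vec S \<le> \<gamma>" "\<gamma> \<le> vec T" using le pl unfolding \<gamma>_def by (auto simp: le_fun_def)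
  hence "S \<subseteq> fld \<gamma>" "fld \<gamma> \<subseteq> T"
    using sub_iff[OF S fld_IF] sub_iff[OF fld_IF T] vec_fld[OF gV] by auto
  hence "fld \<gamma> \<in> interm R S T" using fld_IF unfolding interm_def by auto
  hence "fld \<gamma> = S \<or> fld \<gamma> = T" using iST by auto
  moreover have "fld \<gamma> \<noteq> S"
  proof
    assume "fld \<gamma> = S"
    hence "\<gamma> = vec S" using vec_fld[OF gV] by simp
    hence "\<gamma> p = vec S p" by simp
    thus False unfolding \<gamma>_def by simp
  qed
  ultimately have "fld \<gamma> = T" by simp
  hence "vec T = \<gamma>" using vec_fld[OF gV] by simp
  thus "T \<in> IF \<and> (\<exists>p\<in>PP. vec T = (vec S)(p := vec S p + 1))" using T pP unfolding \<gamma>_def by auto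
next
  assume h: "T \<in> IF \<and> (\<exists>p\<in>PP. vec T = (vec S)(p := vec S p + 1))"
  then obtain p where T: "T \<in> IF" and p: "p \<in> PP" "vec T = (vec S)(p := vec S p + 1)" by auto
  have le: "vec S \<le> vec T" using p by (auto simp: le_fun_def)
  have ne: "S \<noteq> T"
  proof
    assume "S = T"
    hence "vec S p = vec T p" by simp
    thus False using p(2) by simp
  qed
  have ST: "S \<subset> T" using sub_iff[OF S T] le ne by auto
  have "interm R S T = {S, T}"
  proof
    show "{S, T} \<subseteq> interm R S T" using S T ST unfolding interm_def by auto
    show "interm R S T \<subseteq> {S, T}"
    proof
      fix W assume W: "W \<in> interm R S T"
      hence WIF: "W \<in> IF" using S T unfolding interm_def by auto
      have "S \<subseteq> W" "W \<subseteq> T" using W unfolding interm_def by auto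
      hence l1: "vec S \<le> vec W" and l2: "vec W \<le> vec T"
        using sub_iff[OF S WIF] sub_iff[OF WIF T] by auto
      have "vec W = vec S \<or> vec W = vec T"
      proof (cases "vec W p = vec S p")
        case True
        have "vec W = vec S"
        proof
          fix q
          have a: "vec S q \<le> vec W q" "vec W q \<le> vec T q" using l1 l2 by (auto simp: le_fun_def)
          show "vec W q = vec S q"
          proof (cases "q = p")
            case True thus ?thesis using \<open>vec W p = vec S p\<close> by simp
          next
            case False thus ?thesis using a p(2) by simp
          qed
        qed
        thus ?thesis by simp
      next
        case False
        have "vec W = vec T"
        proof
          fix q
          have a: "vec S q \<le> vec W q" "vec W q \<le> vec T q" using l1 l2 by (auto simp: le_fun_def)
          show "vec W q = vec T q"
          proof (cases "q = p")
            case True thus ?thesis using a p(2) False by simp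
          next
            case False thus ?thesis using a p(2) by simp
          qed
        qed
        thus ?thesis by simp
      qed
      thus "W \<in> {S, T}" using vec_inj[OF WIF S] vec_inj[OF WIF T] by auto
    qed
  qed
  thus "minimal_ext R S T" unfolding minimal_ext_def using ST by simp
qed

end


context cyc
begin

lemma al_pos: "p \<in> PP \<Longrightarrow> 0 < al p"
  using prime_multiplicity_gt_zero_iff[of p dd] dd_pos by (auto simp: in_prime_factors_iff)

definition "ev p b = (\<lambda>q. if q = p then b else (0::nat))"

lemma ev_V: "p \<in> PP \<Longrightarrow> b \<le> al p \<Longrightarrow> ev p b \<in> VV"
  unfolding ev_def VV_def by auto

lemma num_ev: "p \<in> PP \<Longrightarrow> (\<Prod>q\<in>PP. q ^ ev p b q) = p ^ b"
proof -
  assume p: "p \<in> PP"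
  have "(\<Prod>q\<in>PP. q ^ ev p b q) = (\<Prod>q\<in>PP. if q = p then p ^ b else 1)"
    unfolding ev_def by (intro prod.cong) auto
  also have "\<dots> = p ^ b" using p by (simp add: prod.delta)
  finally show ?thesis .
qed

lemma vec_eq_iff: "T \<in> IF \<Longrightarrow> \<gamma> \<in> VV \<Longrightarrow> vec T = \<gamma> \<longleftrightarrow> (\<forall>p\<in>PP. vec T p = \<gamma> p)"
  using vec_V[of T] unfolding VV_def by (auto simp: fun_eq_iff)

lemma deg_pow_iff: "T \<in> IF \<Longrightarrow> p \<in> PP \<Longrightarrow> b \<le> al p \<Longrightarrow> dim k T = p ^ b \<longleftrightarrow> vec T = ev p b"
  using deg_eq_prod[of T "ev p b"] num_ev[of p b] vec_eq_iff[OF _ ev_V] by simp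

lemma PP_ne: "k \<noteq> L \<Longrightarrow> PP \<noteq> {}"
proof
  assume "k \<noteq> L" "PP = {}"
  hence "vec L = vec k" unfolding vec_L vec_k by auto
  thus False using vec_inj[OF L_IF k_IF] \<open>k \<noteq> L\<close> by simp
qed

lemma atoms_k_iff: "T \<in> atoms R k L \<longleftrightarrow> T \<in> IF \<and> (\<exists>p\<in>PP. vec T = ev p 1)"
proof -
  have eq: "\<And>p. (vec k)(p := vec k p + 1) = ev p 1" unfolding vec_k ev_def by (auto simp: fun_eq_iff)
  have "T \<in> atoms R k L \<longleftrightarrow> minimal_ext R k T \<and> T \<subseteq> L" unfolding atoms_def by simp
  also have "\<dots> \<longleftrightarrow> T \<in> IF \<and> (\<exists>p\<in>PP. vec T = ev p 1)"
  proof (cases "T \<subseteq> L")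
    case True
    show ?thesis using minimal_ext_iff[OF k_IF True] eq True by simp
  next
    case False thus ?thesis by auto
  qed
  finally show ?thesis .
qed

lemma atom_deg_iff: "T \<in> IF \<Longrightarrow> T \<in> atoms R k L \<longleftrightarrow> (\<exists>p\<in>PP. dim k T = p)"
proof -
  assume T: "T \<in> IF"
  have "\<And>p. p \<in> PP \<Longrightarrow> dim k T = p \<longleftrightarrow> vec T = ev p 1"
  proof -
    fix p assume p: "p \<in> PP"
    have "1 \<le> al p" using al_pos[OF p] by simp
    thus "dim k T = p \<longleftrightarrow> vec T = ev p 1" using deg_pow_iff[OF T p \<open>1 \<le> al p\<close>] by simp
  qed
  thus ?thesis using atoms_k_iff T by auto
qed

lemma atom_unique: "p \<in> PP \<Longrightarrow> \<exists>!A. A \<in> atoms R k L \<and> dim k A = p"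
proof -
  assume p: "p \<in> PP"
  have V: "ev p 1 \<in> VV" using ev_V[OF p] al_pos[OF p] by simp
  have eq: "\<And>A. A \<in> IF \<Longrightarrow> dim k A = p \<longleftrightarrow> vec A = ev p 1"
    using deg_pow_iff[OF _ p, of _ 1] al_pos[OF p] by simp
  show ?thesis
  proof (rule ex1I[of _ "fld (ev p 1)"])
    have A1: "fld (ev p 1) \<in> atoms R k L" unfolding atoms_k_iff using fld_IF vec_fld[OF V] p by blast
    have A2: "dim k (fld (ev p 1)) = p" using eq[OF fld_IF] vec_fld[OF V] by simp
    show "fld (ev p 1) \<in> atoms R k L \<and> dim k (fld (ev p 1)) = p" using A1 A2 by simp
  next
    fix A assume A: "A \<in> atoms R k L \<and> dim k A = p"
    hence AI: "A \<in> IF" unfolding atoms_k_iff by blast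
    hence "vec A = ev p 1" using A eq[OF AI] by simp
    thus "A = fld (ev p 1)" using fld_vec[OF AI] by simp
  qed
qed

lemma the_atom: "p \<in> PP \<Longrightarrow> (THE A. A \<in> atoms R k L \<and> dim k A = p) = fld (ev p 1)"
proof -
  assume p: "p \<in> PP"
  have V: "ev p 1 \<in> VV" using ev_V[OF p] al_pos[OF p] by simp
  have A1: "fld (ev p 1) \<in> atoms R k L" unfolding atoms_k_iff using fld_IF vec_fld[OF V] p by blast
  have "1 \<le> al p" using al_pos[OF p] by simp
  hence A2: "dim k (fld (ev p 1)) = p" using deg_pow_iff[OF fld_IF p \<open>1 \<le> al p\<close>] vec_fld[OF V] by simp
  have "fld (ev p 1) \<in> atoms R k L \<and> dim k (fld (ev p 1)) = p" using A1 A2 by simp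
  thus ?thesis by (rule the1_equality[OF atom_unique[OF p]])
qed

lemma atoms_k_eq: "atoms R k L = (\<lambda>p. fld (ev p 1)) ` PP"
proof
  show "atoms R k L \<subseteq> (\<lambda>p. fld (ev p 1)) ` PP"
  proof
    fix T assume "T \<in> atoms R k L"
    then obtain p where p: "T \<in> IF" "p \<in> PP" "vec T = ev p 1" unfolding atoms_k_iff by blast
    have "T = fld (ev p 1)" using fld_vec[OF p(1)] p(3) by simp
    thus "T \<in> (\<lambda>p. fld (ev p 1)) ` PP" using p(2) by blast
  qed
  show "(\<lambda>p. fld (ev p 1)) ` PP \<subseteq> atoms R k L"
  proof
    fix T assume "T \<in> (\<lambda>p. fld (ev p 1)) ` PP"
    then obtain p where p: "p \<in> PP" "T = fld (ev p 1)" by auto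
    have V: "ev p 1 \<in> VV" using ev_V[OF p(1)] al_pos[OF p(1)] by simp
    show "T \<in> atoms R k L" unfolding atoms_k_iff using fld_IF vec_fld[OF V] p by blast
  qed
qed

lemma socle_k: "k \<noteq> L \<Longrightarrow> socle R k L = generate_field R (\<Union>p\<in>PP. (THE A. A \<in> atoms R k L \<and> dim k A = p))"
proof -
  assume kL': "k \<noteq> L"
  have "(\<Union>p\<in>PP. (THE A. A \<in> atoms R k L \<and> dim k A = p)) = (\<Union>p\<in>PP. fld (ev p 1))"
    using the_atom by auto
  also have "\<dots> = k \<union> \<Union> (atoms R k L)"
  proof -
    obtain p where p: "p \<in> PP" using PP_ne[OF kL'] by blast
    have "k \<subseteq> fld (ev p 1)" using fld_IF by blast
    hence "k \<subseteq> (\<Union>p\<in>PP. fld (ev p 1))" using p by blast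
    thus ?thesis unfolding atoms_k_eq by auto
  qed
  finally show ?thesis unfolding socle_def by simp
qed

lemma socle_vec:
  assumes S: "S \<in> IF"
  shows "socle R S L \<in> IF \<and> vec (socle R S L) = (\<lambda>p. if p \<in> PP then min (vec S p + 1) (al p) else 0)"
proof -
  define g where "g = (\<lambda>p. if p \<in> PP then min (vec S p + 1) (al p) else 0)"
  have gV: "g \<in> VV" unfolding g_def VV_def by auto
  have vS: "vec S \<in> VV" using vec_V[OF S] .
  have atomsS: "\<And>T. T \<in> atoms R S L \<longleftrightarrow> T \<in> IF \<and> (\<exists>p\<in>PP. vec T = (vec S)(p := vec S p + 1))"
    unfolding atoms_def using minimal_ext_iff[OF S] by auto
  define H where "H = S \<union> \<Union> (atoms R S L)"
  have HL: "H \<subseteq> L" unfolding H_def using S atomsS by auto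
  have kH: "k \<subseteq> H" unfolding H_def using S by auto
  have G: "generate_field R H \<in> IF" using gen_IF[OF HL kH] .
  have "H \<subseteq> fld g"
  proof -
    have "S \<subseteq> fld g" using sub_iff[OF S fld_IF] vec_fld[OF gV] vS
      unfolding g_def VV_def by (auto simp: le_fun_def)
    moreover have "T \<subseteq> fld g" if T: "T \<in> atoms R S L" for T
    proof -
      obtain p where p: "T \<in> IF" "p \<in> PP" "vec T = (vec S)(p := vec S p + 1)" using atomsS T by auto
      have "vec T p \<le> al p" using vec_V[OF p(1)] p(2) unfolding VV_def by auto
      hence "vec T \<le> g" using p vS unfolding g_def VV_def by (auto simp: le_fun_def)
      thus ?thesis using sub_iff[OF p(1) fld_IF] vec_fld[OF gV] by simp
    qed
    ultimately show ?thesis unfolding H_def by auto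
  qed
  hence 1: "generate_field R H \<subseteq> fld g" using gen_le[OF HL fld_IF] by simp
  have "g \<le> vec (generate_field R H)"
  proof (unfold le_fun_def, intro allI)
    fix p
    have SG: "vec S \<le> vec (generate_field R H)"
      using sub_iff[OF S G] gen_incl[OF HL] unfolding H_def by auto
    show "g p \<le> vec (generate_field R H) p"
    proof (cases "p \<in> PP \<and> vec S p < al p")
      case True
      define \<delta> where "\<delta> = (vec S)(p := vec S p + 1)"
      have dV: "\<delta> \<in> VV" using vS True unfolding \<delta>_def VV_def by auto
      have "fld \<delta> \<in> atoms R S L" using atomsS fld_IF vec_fld[OF dV] True unfolding \<delta>_def by auto
      hence "fld \<delta> \<subseteq> generate_field R H" using gen_incl[OF HL] unfolding H_def by auto
      hence "\<delta> \<le> vec (generate_field R H)" using sub_iff[OF fld_IF G] vec_fld[OF dV] by simp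
      hence "\<delta> p \<le> vec (generate_field R H) p" by (simp add: le_fun_def)
      thus ?thesis unfolding g_def \<delta>_def using True by simp
    next
      case False
      hence "g p \<le> vec S p" unfolding g_def by auto
      thus ?thesis using le_funD[OF SG, of p] by linarith
    qed
  qed
  hence "fld g \<subseteq> generate_field R H" using sub_iff[OF fld_IF G] vec_fld[OF gV] by simp
  hence "generate_field R H = fld g" using 1 by auto
  moreover have "socle R S L = generate_field R H" unfolding socle_def H_def by simp
  ultimately show ?thesis using fld_IF vec_fld[OF gV] unfolding g_def by simp
qed

definition "bet j p = (if al p < j then al p else j)"
definition "bv j = (\<lambda>p. if p \<in> PP then bet j p else 0)"

lemma bv_V: "bv j \<in> VV" unfolding bv_def bet_def VV_def by auto

lemma loewy_vec: "loewy R k L j \<in> IF \<and> vec (loewy R k L j) = bv j"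
proof (induct j)
  case 0
  have "bv 0 = (\<lambda>_. 0)" unfolding bv_def bet_def by auto
  thus ?case unfolding loewy_def using k_IF vec_k by simp
next
  case (Suc j)
  have step: "loewy R k L (Suc j) = (if loewy R k L j = L then L else socle R (loewy R k L j) L)"
    unfolding loewy_def by simp
  show ?case
  proof (cases "loewy R k L j = L")
    case True
    hence "bv j = vec L" using Suc by simp
    have "\<forall>p\<in>PP. bet j p = al p"
    proof
      fix p assume p: "p \<in> PP"
      have "bv j p = vec L p" using \<open>bv j = vec L\<close> by simp
      thus "bet j p = al p" using p unfolding bv_def vec_L by simp
    qed
    hence "\<forall>p\<in>PP. al p \<le> j" unfolding bet_def by (metis le_refl nless_le)
    hence "bv (Suc j) = vec L" unfolding bv_def bet_def vec_L by (auto simp: fun_eq_iff)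
    thus ?thesis using step True L_IF by simp
  next
    case False
    have "vec (socle R (loewy R k L j) L) = bv (Suc j)"
      using socle_vec[of "loewy R k L j"] Suc unfolding bv_def bet_def by (auto simp: fun_eq_iff)
    thus ?thesis using step False socle_vec[of "loewy R k L j"] Suc by simp
  qed
qed

lemma loewy_IF: "loewy R k L j \<in> IF" using loewy_vec by simp

lemma loewy_eq_L: "loewy R k L j = L \<longleftrightarrow> (\<forall>p\<in>PP. al p \<le> j)"
proof -
  have "loewy R k L j = L \<longleftrightarrow> bv j = vec L"
  proof
    assume "loewy R k L j = L" thus "bv j = vec L" using loewy_vec[of j] by simp
  next
    assume "bv j = vec L"
    hence "vec (loewy R k L j) = vec L" using loewy_vec[of j] by simp
    thus "loewy R k L j = L" using vec_inj[OF loewy_IF L_IF] by simp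
  qed
  also have "\<dots> \<longleftrightarrow> (\<forall>p\<in>PP. al p \<le> j)"
  proof
    assume h: "bv j = vec L"
    show "\<forall>p\<in>PP. al p \<le> j"
    proof
      fix p assume p: "p \<in> PP"
      have "bv j p = vec L p" using h by simp
      hence "bet j p = al p" using p by (simp add: bv_def vec_L)
      thus "al p \<le> j" unfolding bet_def by (cases "al p < j") auto
    qed
  next
    assume h: "\<forall>p\<in>PP. al p \<le> j"
    show "bv j = vec L"
    proof
      fix p show "bv j p = vec L p"
        using h unfolding bv_def bet_def vec_L by (cases "p \<in> PP"; cases "al p < j") auto
    qed
  qed
  finally show ?thesis .
qed

lemma loewy_length_eq:
  assumes "k \<noteq> L" shows "loewy_length R k L = Max (al ` PP)"
proof -
  have ne: "PP \<noteq> {}" using PP_ne[OF assms] .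
  define a where "a = Max (al ` PP)"
  have "\<And>j. loewy R k L j = L \<longleftrightarrow> a \<le> j"
    unfolding loewy_eq_L a_def using ne by simp
  thus ?thesis unfolding loewy_length_def a_def[symmetric]
    by (intro Least_equality) auto
qed

lemma loewy_dim: "dim k (loewy R k L j) = (\<Prod>p\<in>PP. p ^ bet j p)"
  using deg_eq_prod[OF loewy_IF, of j "bet j"] loewy_vec[of j] unfolding bv_def by auto

end


context cyc
begin

lemma bet_le: "bet j p \<le> al p" unfolding bet_def by auto
lemma bet_mono: "bet j p \<le> bet (Suc j) p" unfolding bet_def by auto
lemma bet_step: "bet j p < al p \<Longrightarrow> bet (Suc j) p = bet j p + 1" unfolding bet_def by auto
lemma bet_step_le: "bet (Suc j) p \<le> bet j p + 1" unfolding bet_def by auto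
lemma bet_lt_iff: "bet j p < al p \<longleftrightarrow> j < al p" unfolding bet_def by auto

lemma bv_le_Suc: "bv j \<le> bv (Suc j)" unfolding bv_def using bet_mono by (auto simp: le_fun_def)

lemma loewy_vec': "vec (loewy R k L j) = bv j" using loewy_vec by simp
lemma loewy_L: "loewy R k L j \<subseteq> L" using loewy_IF by auto

lemma step_vec_V: "p \<in> PP \<Longrightarrow> bet j p < al p \<Longrightarrow> (bv j)(p := bv j p + 1) \<in> VV"
  unfolding VV_def bv_def using bet_le by auto

lemma atoms_step_char:
  assumes T: "T \<in> IF"
  shows "T \<in> atoms R (loewy R k L j) (loewy R k L (Suc j)) \<longleftrightarrow>
    (\<exists>p0\<in>PP. bet j p0 < al p0 \<and> vec T = (bv j)(p0 := bv j p0 + 1))"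
proof -
  have TL: "T \<subseteq> L" using T by auto
  have "T \<in> atoms R (loewy R k L j) (loewy R k L (Suc j)) \<longleftrightarrow>
      minimal_ext R (loewy R k L j) T \<and> T \<subseteq> loewy R k L (Suc j)" unfolding atoms_def by simp
  also have "\<dots> \<longleftrightarrow> (\<exists>p0\<in>PP. vec T = (bv j)(p0 := bv j p0 + 1)) \<and> vec T \<le> bv (Suc j)"
  proof -
    have e1: "minimal_ext R (loewy R k L j) T \<longleftrightarrow> (\<exists>p0\<in>PP. vec T = (bv j)(p0 := bv j p0 + 1))"
      using minimal_ext_iff[OF loewy_IF TL, of j] T unfolding loewy_vec' by blast
    have e2: "T \<subseteq> loewy R k L (Suc j) \<longleftrightarrow> vec T \<le> bv (Suc j)"
      using sub_iff[OF T loewy_IF, of "Suc j"] unfolding loewy_vec' .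
    show ?thesis using e1 e2 by blast
  qed
  also have "\<dots> \<longleftrightarrow> (\<exists>p0\<in>PP. bet j p0 < al p0 \<and> vec T = (bv j)(p0 := bv j p0 + 1))"
  proof
    assume h: "(\<exists>p0\<in>PP. vec T = (bv j)(p0 := bv j p0 + 1)) \<and> vec T \<le> bv (Suc j)"
    then obtain p0 where p0: "p0 \<in> PP" "vec T = (bv j)(p0 := bv j p0 + 1)" by auto
    have "vec T \<le> bv (Suc j)" using h by blast
    hence "vec T p0 \<le> bv (Suc j) p0" by (rule le_funD)
    hence "bet j p0 + 1 \<le> bet (Suc j) p0" using p0 unfolding bv_def by simp
    hence "bet j p0 < al p0" using bet_le[of "Suc j" p0] by simp
    thus "\<exists>p0\<in>PP. bet j p0 < al p0 \<and> vec T = (bv j)(p0 := bv j p0 + 1)" using p0 by blast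
  next
    assume "\<exists>p0\<in>PP. bet j p0 < al p0 \<and> vec T = (bv j)(p0 := bv j p0 + 1)"
    then obtain p0 where p0: "p0 \<in> PP" "bet j p0 < al p0" "vec T = (bv j)(p0 := bv j p0 + 1)" by auto
    have "vec T \<le> bv (Suc j)"
    proof (unfold le_fun_def, intro allI)
      fix p show "vec T p \<le> bv (Suc j) p"
      proof (cases "p = p0")
        case True thus ?thesis using p0 bet_step[OF p0(2)] unfolding bv_def by simp
      next
        case False thus ?thesis using p0 le_funD[OF bv_le_Suc[of j], of p] by simp
      qed
    qed
    thus "(\<exists>p0\<in>PP. vec T = (bv j)(p0 := bv j p0 + 1)) \<and> vec T \<le> bv (Suc j)" using p0 by blast
  qed
  finally show ?thesis .
qed

lemma atoms_step_IF: "T \<in> atoms R (loewy R k L j) (loewy R k L (Suc j)) \<Longrightarrow> T \<in> IF"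
proof -
  assume T: "T \<in> atoms R (loewy R k L j) (loewy R k L (Suc j))"
  hence "minimal_ext R (loewy R k L j) T" "T \<subseteq> L" using loewy_L unfolding atoms_def by auto
  thus "T \<in> IF" using minimal_ext_iff[OF loewy_IF] by blast
qed

lemma atoms_step_stmt:
  assumes T: "T \<in> IF"
  shows "T \<in> atoms R (loewy R k L j) (loewy R k L (Suc j)) \<longleftrightarrow>
    (\<exists>\<gamma>. dim k T = (\<Prod>p\<in>PP. p ^ \<gamma> p) \<and>
       (\<exists>p0\<in>PP. bet j p0 < al p0 \<and> \<gamma> p0 = bet j p0 + 1 \<and> (\<forall>p\<in>PP - {p0}. \<gamma> p = bet j p)))"
proof -
  have "(\<exists>p0\<in>PP. bet j p0 < al p0 \<and> vec T = (bv j)(p0 := bv j p0 + 1)) \<longleftrightarrow>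
    (\<exists>\<gamma>. dim k T = (\<Prod>p\<in>PP. p ^ \<gamma> p) \<and>
       (\<exists>p0\<in>PP. bet j p0 < al p0 \<and> \<gamma> p0 = bet j p0 + 1 \<and> (\<forall>p\<in>PP - {p0}. \<gamma> p = bet j p)))"
  proof
    assume "\<exists>p0\<in>PP. bet j p0 < al p0 \<and> vec T = (bv j)(p0 := bv j p0 + 1)"
    then obtain p0 where p0: "p0 \<in> PP" "bet j p0 < al p0" "vec T = (bv j)(p0 := bv j p0 + 1)" by auto
    have d: "dim k T = (\<Prod>p\<in>PP. p ^ vec T p)" using deg_num[OF T] unfolding num_def .
    have "vec T p0 = bet j p0 + 1" using p0 unfolding bv_def by simp
    moreover have "\<forall>p\<in>PP - {p0}. vec T p = bet j p" using p0 unfolding bv_def by simp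
    ultimately show "\<exists>\<gamma>. dim k T = (\<Prod>p\<in>PP. p ^ \<gamma> p) \<and>
       (\<exists>p0\<in>PP. bet j p0 < al p0 \<and> \<gamma> p0 = bet j p0 + 1 \<and> (\<forall>p\<in>PP - {p0}. \<gamma> p = bet j p))"
      using d p0(1,2) by blast
  next
    assume "\<exists>\<gamma>. dim k T = (\<Prod>p\<in>PP. p ^ \<gamma> p) \<and>
       (\<exists>p0\<in>PP. bet j p0 < al p0 \<and> \<gamma> p0 = bet j p0 + 1 \<and> (\<forall>p\<in>PP - {p0}. \<gamma> p = bet j p))"
    then obtain \<gamma> p0 where g: "dim k T = (\<Prod>p\<in>PP. p ^ \<gamma> p)" and p0: "p0 \<in> PP" "bet j p0 < al p0"
      "\<gamma> p0 = bet j p0 + 1" "\<forall>p\<in>PP - {p0}. \<gamma> p = bet j p" by blast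
    have vg: "\<forall>p\<in>PP. vec T p = \<gamma> p" using deg_eq_prod[OF T] g by blast
    have "vec T = (bv j)(p0 := bv j p0 + 1)"
    proof (rule vec_eq_iff[OF T step_vec_V[OF p0(1,2)], THEN iffD2], intro ballI)
      fix p assume p: "p \<in> PP"
      show "vec T p = ((bv j)(p0 := bv j p0 + 1)) p"
        using vg p p0 unfolding bv_def by (cases "p = p0") auto
    qed
    thus "\<exists>p0\<in>PP. bet j p0 < al p0 \<and> vec T = (bv j)(p0 := bv j p0 + 1)" using p0 by blast
  qed
  thus ?thesis using atoms_step_char[OF T] by simp
qed

lemma atoms_step_eq:
  "atoms R (loewy R k L j) (loewy R k L (Suc j)) = (\<lambda>p. fld ((bv j)(p := bv j p + 1))) ` {p\<in>PP. j < al p}"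
proof
  show "atoms R (loewy R k L j) (loewy R k L (Suc j)) \<subseteq> (\<lambda>p. fld ((bv j)(p := bv j p + 1))) ` {p\<in>PP. j < al p}"
  proof
    fix T assume T: "T \<in> atoms R (loewy R k L j) (loewy R k L (Suc j))"
    have TI: "T \<in> IF" using atoms_step_IF[OF T] .
    then obtain p0 where p0: "p0 \<in> PP" "bet j p0 < al p0" "vec T = (bv j)(p0 := bv j p0 + 1)"
      using atoms_step_char[OF TI] T by blast
    have "T = fld ((bv j)(p0 := bv j p0 + 1))" using fld_vec[OF TI] p0(3) by simp
    moreover have "p0 \<in> {p\<in>PP. j < al p}" using p0 bet_lt_iff by simp
    ultimately show "T \<in> (\<lambda>p. fld ((bv j)(p := bv j p + 1))) ` {p\<in>PP. j < al p}" by blast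
  qed
next
  show "(\<lambda>p. fld ((bv j)(p := bv j p + 1))) ` {p\<in>PP. j < al p} \<subseteq> atoms R (loewy R k L j) (loewy R k L (Suc j))"
  proof
    fix T assume "T \<in> (\<lambda>p. fld ((bv j)(p := bv j p + 1))) ` {p\<in>PP. j < al p}"
    then obtain p0 where p0: "p0 \<in> PP" "j < al p0" "T = fld ((bv j)(p0 := bv j p0 + 1))" by blast
    have b: "bet j p0 < al p0" using p0(2) bet_lt_iff by simp
    have "vec T = (bv j)(p0 := bv j p0 + 1)" using p0(3) vec_fld[OF step_vec_V[OF p0(1) b]] by simp
    thus "T \<in> atoms R (loewy R k L j) (loewy R k L (Suc j))"
      using atoms_step_char[OF fld_IF[of "(bv j)(p0 := bv j p0 + 1)"]] p0 b by blast
  qed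
qed

lemma card_atoms_step: "card (atoms R (loewy R k L j) (loewy R k L (Suc j))) = card {p\<in>PP. j < al p}"
proof -
  have "inj_on (\<lambda>p. fld ((bv j)(p := bv j p + 1))) {p\<in>PP. j < al p}"
  proof (rule inj_onI)
    fix p q assume p: "p \<in> {p\<in>PP. j < al p}" and q: "q \<in> {p\<in>PP. j < al p}"
      and e: "fld ((bv j)(p := bv j p + 1)) = fld ((bv j)(q := bv j q + 1))"
    have "(bv j)(p := bv j p + 1) = (bv j)(q := bv j q + 1)"
      using fld_inj[OF step_vec_V step_vec_V e] p q bet_lt_iff by auto
    hence "((bv j)(p := bv j p + 1)) p = ((bv j)(q := bv j q + 1)) p" by simp
    thus "p = q" by (cases "p = q") auto
  qed
  thus ?thesis unfolding atoms_step_eq by (rule card_image)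
qed

lemma distrib_IF:
  assumes "T \<in> IF" "U \<in> IF" "V \<in> IF"
  shows "T \<inter> compositum R U V = compositum R (T \<inter> U) (T \<inter> V)"
proof (rule vec_inj)
  show "T \<inter> compositum R U V \<in> IF" by (rule inter_IF[OF assms(1) comp_IF[OF assms(2,3)]])
  show "compositum R (T \<inter> U) (T \<inter> V) \<in> IF" by (rule comp_IF[OF inter_IF[OF assms(1,2)] inter_IF[OF assms(1,3)]])
  have "vec (T \<inter> compositum R U V) = (\<lambda>p. min (vec T p) (max (vec U p) (vec V p)))"
    using vec_inter[OF assms(1) comp_IF[OF assms(2,3)]] vec_comp[OF assms(2,3)] by simp
  also have "\<dots> = (\<lambda>p. max (min (vec T p) (vec U p)) (min (vec T p) (vec V p)))"
    by (auto simp: fun_eq_iff min_def max_def)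
  also have "\<dots> = vec (compositum R (T \<inter> U) (T \<inter> V))"
    using vec_comp[OF inter_IF[OF assms(1,2)] inter_IF[OF assms(1,3)]] vec_inter[OF assms(1,2)] vec_inter[OF assms(1,3)] by simp
  finally show "vec (T \<inter> compositum R U V) = vec (compositum R (T \<inter> U) (T \<inter> V))" .
qed

lemma interm_sub_IF: "K \<in> IF \<Longrightarrow> K' \<in> IF \<Longrightarrow> interm R K K' \<subseteq> IF"
  unfolding interm_def by auto

lemma boolean_interval:
  assumes K: "K \<in> IF" and K': "K' \<in> IF" and le: "vec K \<le> vec K'"
    and le1: "\<And>p. vec K' p \<le> vec K p + 1"
  shows "is_boolean_ext R K K'"
  unfolding is_boolean_ext_def
proof (intro conjI ballI)
  fix T U V assume h: "T \<in> interm R K K'" "U \<in> interm R K K'" "V \<in> interm R K K'"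
  have "T \<in> IF" "U \<in> IF" "V \<in> IF" using h interm_sub_IF[OF K K'] by (blast+)
  thus "T \<inter> compositum R U V = compositum R (T \<inter> U) (T \<inter> V)" by (rule distrib_IF)
next
  fix V assume V: "V \<in> interm R K K'"
  have VI: "V \<in> IF" using V interm_sub_IF[OF K K'] by blast
  have KV: "K \<subseteq> V" "V \<subseteq> K'" using V unfolding interm_def by auto
  have a: "vec K \<le> vec V" "vec V \<le> vec K'" using sub_iff[OF K VI] sub_iff[OF VI K'] KV by auto
  define c where "c = (\<lambda>p. vec K p + vec K' p - vec V p)"
  have aa: "\<And>p. vec K p \<le> vec V p" "\<And>p. vec V p \<le> vec K' p" using le_funD[OF a(1)] le_funD[OF a(2)] by auto
  have cases: "\<And>p. vec V p = vec K p \<or> vec V p = vec K' p"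
  proof -
    fix p show "vec V p = vec K p \<or> vec V p = vec K' p" using aa[of p] le1[of p] by arith
  qed
  have cK': "\<And>p. c p \<le> vec K' p"
  proof -
    fix p show "c p \<le> vec K' p" unfolding c_def using aa[of p] by arith
  qed
  have Kc: "\<And>p. vec K p \<le> c p"
  proof -
    fix p show "vec K p \<le> c p" unfolding c_def using aa[of p] by arith
  qed
  have cV: "c \<in> VV"
  proof -
    have "\<And>p. p \<notin> PP \<Longrightarrow> c p = 0" unfolding c_def using vec_V[OF K] vec_V[OF K'] unfolding VV_def by simp
    moreover have "\<And>p. p \<in> PP \<Longrightarrow> c p \<le> al p"
    proof -
      fix p assume "p \<in> PP"
      hence "vec K' p \<le> al p" using vec_V[OF K'] unfolding VV_def by blast
      thus "c p \<le> al p" using cK'[of p] by linarith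
    qed
    ultimately show ?thesis unfolding VV_def by blast
  qed
  have c1: "vec K \<le> c" "c \<le> vec K'" unfolding le_fun_def using Kc cK' by (blast, blast)
  have "K \<subseteq> fld c" using sub_iff[OF K fld_IF, of c] vec_fld[OF cV] c1(1) by simp
  moreover have "fld c \<subseteq> K'" using sub_iff[OF fld_IF K', of c] vec_fld[OF cV] c1(2) by simp
  moreover have "subfield (fld c) R" using fld_IF[of c] by blast
  ultimately have V'I: "fld c \<in> interm R K K'" unfolding interm_def by blast
  have "vec (V \<inter> fld c) = vec K"
  proof -
    have "vec (V \<inter> fld c) = (\<lambda>p. min (vec V p) (c p))" using vec_inter[OF VI fld_IF] vec_fld[OF cV] by simp
    also have "\<dots> = vec K"
    proof
      fix p show "min (vec V p) (c p) = vec K p" using cases[of p] aa[of p] unfolding c_def by arith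
    qed
    finally show ?thesis .
  qed
  hence 1: "V \<inter> fld c = K" using vec_inj[OF inter_IF[OF VI fld_IF] K] by simp
  have "vec (compositum R V (fld c)) = vec K'"
  proof -
    have "vec (compositum R V (fld c)) = (\<lambda>p. max (vec V p) (c p))" using vec_comp[OF VI fld_IF] vec_fld[OF cV] by simp
    also have "\<dots> = vec K'"
    proof
      fix p show "max (vec V p) (c p) = vec K' p" using cases[of p] aa[of p] unfolding c_def by arith
    qed
    finally show ?thesis .
  qed
  hence 2: "compositum R V (fld c) = K'" using vec_inj[OF comp_IF[OF VI fld_IF] K'] by simp
  show "\<exists>V'\<in>interm R K K'. V \<inter> V' = K \<and> compositum R V V' = K'" using V'I 1 2 by blast
qed

lemma boolean_step: "is_boolean_ext R (loewy R k L j) (loewy R k L (Suc j))"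
proof (rule boolean_interval[OF loewy_IF loewy_IF])
  show "vec (loewy R k L j) \<le> vec (loewy R k L (Suc j))" using loewy_vec' bv_le_Suc by simp
  fix p show "vec (loewy R k L (Suc j)) p \<le> vec (loewy R k L j) p + 1"
    unfolding loewy_vec' bv_def using bet_step_le by simp
qed

end


context cyc
begin

lemma vec_out: "T \<in> IF \<Longrightarrow> p \<notin> PP \<Longrightarrow> vec T p = 0" unfolding vec_def by simp
lemma vec_le_al: "T \<in> IF \<Longrightarrow> vec T p \<le> al p"
  using vec_V unfolding VV_def by (cases "p \<in> PP") auto

lemma vec_ext: "T \<in> IF \<Longrightarrow> U \<in> IF \<Longrightarrow> (\<And>p. p \<in> PP \<Longrightarrow> vec T p = vec U p) \<Longrightarrow> T = U"
proof -
  assume T: "T \<in> IF" and U: "U \<in> IF" and h: "\<And>p. p \<in> PP \<Longrightarrow> vec T p = vec U p"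
  have "vec T = vec U"
  proof
    fix p show "vec T p = vec U p" using h vec_out[OF T] vec_out[OF U] by (cases "p \<in> PP") auto
  qed
  thus ?thesis using vec_inj[OF T U] by simp
qed

lemma vec_k_iff: "T \<in> IF \<Longrightarrow> T = k \<longleftrightarrow> (\<forall>p\<in>PP. vec T p = 0)"
proof
  assume T: "T \<in> IF"
  show "T = k \<Longrightarrow> \<forall>p\<in>PP. vec T p = 0" using vec_k by simp
  show "\<forall>p\<in>PP. vec T p = 0 \<Longrightarrow> T = k" using vec_ext[OF T k_IF] vec_k by simp
qed

lemma pi_irr_iff:
  assumes T: "T \<in> IF" and Tk: "T \<noteq> k"
  shows "Pi_irreducible R k L T \<longleftrightarrow> (\<exists>p\<in>PP. \<exists>b\<in>{1..al p}. dim k T = p ^ b)"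
proof
  assume pi: "Pi_irreducible R k L T"
  have irr: "\<And>T1 T2. T1 \<in> IF \<Longrightarrow> T2 \<in> IF \<Longrightarrow> T = compositum R T1 T2 \<Longrightarrow> T = T1 \<or> T = T2"
    using pi unfolding Pi_irreducible_def interm_eq by blast
  obtain p where p: "p \<in> PP" "vec T p \<noteq> 0" using vec_k_iff[OF T] Tk by blast
  define b where "b = vec T p"
  have b: "1 \<le> b" "b \<le> al p" using p vec_le_al[OF T] unfolding b_def by auto
  have others: "\<And>q. q \<in> PP \<Longrightarrow> q \<noteq> p \<Longrightarrow> vec T q = 0"
  proof (rule ccontr)
    fix q assume q: "q \<in> PP" "q \<noteq> p" and nz: "vec T q \<noteq> 0"
    define g1 where "g1 = (vec T)(q := 0)"
    define g2 where "g2 = (vec T)(p := 0)"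
    have g1V: "g1 \<in> VV" using vec_V[OF T] unfolding g1_def VV_def by auto
    have g2V: "g2 \<in> VV" using vec_V[OF T] unfolding g2_def VV_def by auto
    have "vec (compositum R (fld g1) (fld g2)) = (\<lambda>x. max (g1 x) (g2 x))"
      using vec_comp[OF fld_IF fld_IF] vec_fld[OF g1V] vec_fld[OF g2V] by simp
    also have "\<dots> = vec T" unfolding g1_def g2_def using q(2) by (auto simp: fun_eq_iff)
    finally have "compositum R (fld g1) (fld g2) = T" using vec_inj[OF comp_IF[OF fld_IF fld_IF] T] by simp
    hence e: "T = compositum R (fld g1) (fld g2)" by simp
    have "T = fld g1 \<or> T = fld g2" by (rule irr[OF fld_IF fld_IF e])
    moreover have "T \<noteq> fld g1"
    proof
      assume "T = fld g1" hence "vec T = g1" using vec_fld[OF g1V] by simp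
      hence "vec T q = g1 q" by simp
      thus False using nz unfolding g1_def by simp
    qed
    moreover have "T \<noteq> fld g2"
    proof
      assume "T = fld g2" hence "vec T = g2" using vec_fld[OF g2V] by simp
      hence "vec T p = g2 p" by simp
      thus False using p(2) unfolding g2_def by simp
    qed
    ultimately show False by blast
  qed
  have "vec T = ev p b"
  proof (rule vec_eq_iff[OF T ev_V[OF p(1) b(2)], THEN iffD2], intro ballI)
    fix q assume "q \<in> PP" thus "vec T q = ev p b q" using others unfolding ev_def b_def by auto
  qed
  hence "dim k T = p ^ b" using deg_pow_iff[OF T p(1) b(2)] by simp
  moreover have "b \<in> {1..al p}" using b by simp
  ultimately show "\<exists>p\<in>PP. \<exists>b\<in>{1..al p}. dim k T = p ^ b" using p(1) by blast
next
  assume "\<exists>p\<in>PP. \<exists>b\<in>{1..al p}. dim k T = p ^ b"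
  then obtain p b where p: "p \<in> PP" "1 \<le> b" "b \<le> al p" "dim k T = p ^ b" by auto
  have vT: "vec T = ev p b" using deg_pow_iff[OF T p(1) p(3)] p(4) by simp
  show "Pi_irreducible R k L T"
    unfolding Pi_irreducible_def interm_eq
  proof (intro conjI ballI impI)
    show "T \<in> IF" by (rule T)
    fix T1 T2 assume T1: "T1 \<in> IF" and T2: "T2 \<in> IF" and e: "T = compositum R T1 T2"
    have mx: "\<And>x. ev p b x = max (vec T1 x) (vec T2 x)"
    proof -
      fix x
      have "vec T = (\<lambda>x. max (vec T1 x) (vec T2 x))" using e vec_comp[OF T1 T2] by simp
      hence "vec T x = max (vec T1 x) (vec T2 x)" by simp
      thus "ev p b x = max (vec T1 x) (vec T2 x)" using vT by simp
    qed
    have z: "\<And>x. x \<noteq> p \<Longrightarrow> vec T1 x = 0 \<and> vec T2 x = 0"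
    proof -
      fix x assume "x \<noteq> p"
      hence "max (vec T1 x) (vec T2 x) = 0" using mx[of x] unfolding ev_def by simp
      thus "vec T1 x = 0 \<and> vec T2 x = 0" by simp
    qed
    have "max (vec T1 p) (vec T2 p) = b" using mx[of p] unfolding ev_def by simp
    hence "vec T1 p = b \<or> vec T2 p = b" by (simp add: max_def split: if_splits)
    thus "T = T1 \<or> T = T2"
    proof
      assume h: "vec T1 p = b"
      have "vec T1 = vec T"
      proof
        fix x show "vec T1 x = vec T x" using h z[of x] vT unfolding ev_def by (cases "x = p") auto
      qed
      thus ?thesis using vec_inj[OF T1 T] by simp
    next
      assume h: "vec T2 p = b"
      have "vec T2 = vec T"
      proof
        fix x show "vec T2 x = vec T x" using h z[of x] vT unfolding ev_def by (cases "x = p") auto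
      qed
      thus ?thesis using vec_inj[OF T2 T] by simp
    qed
  qed
qed

lemma pi_irr_set: "{T. Pi_irreducible R k L T \<and> T \<noteq> k} = (\<lambda>(p, b). fld (ev p b)) ` (SIGMA p:PP. {1..al p})"
proof
  show "{T. Pi_irreducible R k L T \<and> T \<noteq> k} \<subseteq> (\<lambda>(p, b). fld (ev p b)) ` (SIGMA p:PP. {1..al p})"
  proof
    fix T assume "T \<in> {T. Pi_irreducible R k L T \<and> T \<noteq> k}"
    hence h: "Pi_irreducible R k L T" "T \<noteq> k" by auto
    have T: "T \<in> IF" using h(1) unfolding Pi_irreducible_def interm_eq by blast
    obtain p b where p: "p \<in> PP" "b \<in> {1..al p}" "dim k T = p ^ b" using pi_irr_iff[OF T h(2)] h(1) by blast
    have "vec T = ev p b" using deg_pow_iff[OF T p(1)] p by auto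
    hence "T = fld (ev p b)" using fld_vec[OF T] by simp
    thus "T \<in> (\<lambda>(p, b). fld (ev p b)) ` (SIGMA p:PP. {1..al p})" using p by force
  qed
next
  show "(\<lambda>(p, b). fld (ev p b)) ` (SIGMA p:PP. {1..al p}) \<subseteq> {T. Pi_irreducible R k L T \<and> T \<noteq> k}"
  proof
    fix T assume "T \<in> (\<lambda>(p, b). fld (ev p b)) ` (SIGMA p:PP. {1..al p})"
    then obtain p b where p: "p \<in> PP" "1 \<le> b" "b \<le> al p" "T = fld (ev p b)" by auto
    have V: "ev p b \<in> VV" using ev_V[OF p(1) p(3)] .
    have vT: "vec T = ev p b" using vec_fld[OF V] p(4) by simp
    have T: "T \<in> IF" using p(4) fld_IF by simp
    have Tk: "T \<noteq> k"
    proof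
      assume "T = k" hence "vec T p = 0" using vec_k by simp
      thus False using vT p(2) unfolding ev_def by simp
    qed
    have "dim k T = p ^ b" using deg_pow_iff[OF T p(1) p(3)] vT by simp
    moreover have "b \<in> {1..al p}" using p by simp
    ultimately have "\<exists>p'\<in>PP. \<exists>b'\<in>{1..al p'}. dim k T = p' ^ b'" using p(1) by blast
    hence "Pi_irreducible R k L T" using pi_irr_iff[OF T Tk] by blast
    thus "T \<in> {T. Pi_irreducible R k L T \<and> T \<noteq> k}" using Tk by simp
  qed
qed

lemma card_pi_irr: "card {T. Pi_irreducible R k L T \<and> T \<noteq> k} = (\<Sum>p\<in>PP. al p)"
proof -
  have "inj_on (\<lambda>(p, b). fld (ev p b)) (SIGMA p:PP. {1..al p})"
  proof (rule inj_onI, clarify)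
    fix p b q c assume p: "p \<in> PP" "b \<in> {1..al p}" and q: "q \<in> PP" "c \<in> {1..al q}"
      and e: "fld (ev p b) = fld (ev q c)"
    have "ev p b = ev q c" using fld_inj[OF ev_V ev_V e] p q by auto
    hence e2: "ev p b p = ev q c p" "ev p b q = ev q c q" by auto
    show "p = q \<and> b = c"
    proof (cases "p = q")
      case True thus ?thesis using e2 unfolding ev_def by simp
    next
      case False thus ?thesis using e2 p(2) unfolding ev_def by simp
    qed
  qed
  hence "card {T. Pi_irreducible R k L T \<and> T \<noteq> k} = card (SIGMA p:PP. {1..al p})"
    unfolding pi_irr_set by (rule card_image)
  also have "\<dots> = (\<Sum>p\<in>PP. card {1..al p})" by (rule card_SigmaI) auto
  also have "\<dots> = (\<Sum>p\<in>PP. al p)" by simp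
  finally show ?thesis .
qed

lemma bij_dim: "bij_betw (dim k) IF {d. d dvd dd}"
proof (rule bij_betw_imageI)
  show "inj_on (dim k) IF"
  proof (rule inj_onI)
    fix T U assume T: "T \<in> IF" and U: "U \<in> IF" and e: "dim k T = dim k U"
    have "T = Phi (dim k T)" using interm_props(2)[of T] T by blast
    also have "\<dots> = Phi (dim k U)" using e by simp
    also have "\<dots> = U" using interm_props(2)[of U] U by blast
    finally show "T = U" .
  qed
  show "dim k ` IF = {d. d dvd dd}"
  proof
    show "dim k ` IF \<subseteq> {d. d dvd dd}" using IF_dvd by blast
    show "{d. d dvd dd} \<subseteq> dim k ` IF"
    proof
      fix t assume "t \<in> {d. d dvd dd}"
      hence t: "t dvd dd" by simp
      have "Phi t \<in> IF" using Phi_subfield Phi_k Phi_L by blast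
      moreover have "dim k (Phi t) = t" using Phi_dim[OF t] .
      ultimately show "t \<in> dim k ` IF" by (metis imageI)
    qed
  qed
qed

lemma finite_divs: "finite {d. d dvd dd}" using dd_pos by (simp add: finite_divisors_nat)

lemma finite_IF: "finite IF" using bij_betw_finite[OF bij_dim] finite_divs by simp

lemma card_IF: "card IF = card {d. d dvd dd}" using bij_betw_same_card[OF bij_dim] .

lemma card_divs: "card {d. d dvd dd} = (\<Prod>p\<in>PP. al p + 1)"
proof -
  define f where "f = (\<lambda>d. restrict (\<lambda>p. multiplicity p d) PP)"
  have "bij_betw f {d. d dvd dd} (PiE PP (\<lambda>p. {0..al p}))"
  proof (rule bij_betw_imageI)
    show "inj_on f {d. d dvd dd}"
    proof (rule inj_onI)
      fix d d' assume d: "d \<in> {d. d dvd dd}" and d': "d' \<in> {d. d dvd dd}" and e: "f d = f d'"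
      have "d = num PP (\<lambda>p. multiplicity p d)" using dvd_r_num[OF dd_pos] d by simp
      also have "\<dots> = num PP (\<lambda>p. multiplicity p d')"
      proof (rule num_cong)
        fix p assume p: "p \<in> PP"
        have "f d p = f d' p" using e by simp
        thus "multiplicity p d = multiplicity p d'" using p unfolding f_def by simp
      qed
      also have "\<dots> = d'" using dvd_r_num[OF dd_pos] d' by simp
      finally show "d = d'" .
    qed
    show "f ` {d. d dvd dd} = PiE PP (\<lambda>p. {0..al p})"
    proof
      show "f ` {d. d dvd dd} \<subseteq> PiE PP (\<lambda>p. {0..al p})"
        unfolding f_def using dvd_r_le[OF dd_pos] by auto
      show "PiE PP (\<lambda>p. {0..al p}) \<subseteq> f ` {d. d dvd dd}"
      proof
        fix g assume g: "g \<in> PiE PP (\<lambda>p. {0..al p})"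
        have gle: "\<forall>p\<in>PP. g p \<le> al p" using g by auto
        have dv: "num PP g dvd dd" using num_dvd_r[OF dd_pos gle] .
        have "f (num PP g) = g"
        proof
          fix p show "f (num PP g) p = g p"
            using num_mult_P[OF dd_pos, of p g] g unfolding f_def
            by (cases "p \<in> PP") (auto simp: PiE_def extensional_def)
        qed
        thus "g \<in> f ` {d. d dvd dd}" using dv by (metis imageI mem_Collect_eq)
      qed
    qed
  qed
  hence "card {d. d dvd dd} = card (PiE PP (\<lambda>p. {0..al p}))" by (rule bij_betw_same_card)
  also have "\<dots> = (\<Prod>p\<in>PP. card {0..al p})" by (rule card_PiE) simp
  also have "\<dots> = (\<Prod>p\<in>PP. al p + 1)" by simp
  finally show ?thesis .
qed

lemma al_le_Max: "p \<in> PP \<Longrightarrow> al p \<le> Max (al ` PP)" by simp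

lemma sum_atoms:
  "(\<Sum>j<Max (al ` PP). card (atoms R (loewy R k L j) (loewy R k L (Suc j)))) = (\<Sum>p\<in>PP. al p)"
proof -
  define M where "M = Max (al ` PP)"
  have "(\<Sum>j<M. card (atoms R (loewy R k L j) (loewy R k L (Suc j)))) = (\<Sum>j<M. card {p\<in>PP. j < al p})"
    using card_atoms_step by simp
  also have "\<dots> = (\<Sum>j<M. \<Sum>p\<in>PP. if j < al p then 1 else 0)"
    by (intro sum.cong refl) (simp add: sum.If_cases Int_def)
  also have "\<dots> = (\<Sum>p\<in>PP. \<Sum>j<M. if j < al p then 1 else 0)" by (rule sum.swap)
  also have "\<dots> = (\<Sum>p\<in>PP. card {j\<in>{..<M}. j < al p})"
    by (intro sum.cong refl) (simp add: sum.If_cases Int_def)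
  also have "\<dots> = (\<Sum>p\<in>PP. al p)"
  proof (intro sum.cong refl)
    fix p assume p: "p \<in> PP"
    have "{j\<in>{..<M}. j < al p} = {..<al p}" using al_le_Max[OF p] unfolding M_def by auto
    thus "card {j\<in>{..<M}. j < al p} = al p" by simp
  qed
  finally show ?thesis unfolding M_def .
qed

end


lemma chain_exists:
  fixes a :: "'p \<Rightarrow> nat"
  assumes "finite A"
  shows "\<exists>Cv. finite Cv \<and> Cv \<noteq> {} \<and> Cv \<subseteq> {\<gamma>. (\<forall>p. p \<notin> A \<longrightarrow> \<gamma> p = 0) \<and> (\<forall>p\<in>A. \<gamma> p \<le> a p)} \<and>
     (\<forall>x\<in>Cv. \<forall>y\<in>Cv. x \<le> y \<or> y \<le> x) \<and> card Cv = (\<Sum>p\<in>A. a p) + 1"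
  using assms
proof (induct A rule: finite_induct)
  case empty
  show ?case by (intro exI[of _ "{\<lambda>_. 0}"]) auto
next
  case (insert q A)
  then obtain Cv where Cv: "finite Cv" "Cv \<noteq> {}"
    "Cv \<subseteq> {\<gamma>. (\<forall>p. p \<notin> A \<longrightarrow> \<gamma> p = 0) \<and> (\<forall>p\<in>A. \<gamma> p \<le> a p)}"
    "\<forall>x\<in>Cv. \<forall>y\<in>Cv. x \<le> y \<or> y \<le> x" "card Cv = (\<Sum>p\<in>A. a p) + 1" by blast
  define top where "top = (\<lambda>p. if p \<in> A then a p else 0)"
  define New where "New = (\<lambda>m. top(q := m)) ` {1..a q}"
  have Cvq: "\<And>x. x \<in> Cv \<Longrightarrow> x q = 0" using Cv(3) insert(2) by blast
  have Cvb: "\<And>x p. x \<in> Cv \<Longrightarrow> x p \<le> top p"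
  proof -
    fix x p assume x: "x \<in> Cv"
    show "x p \<le> top p" using Cv(3) x unfolding top_def by (cases "p \<in> A") auto
  qed
  have disj: "Cv \<inter> New = {}"
  proof (rule ccontr)
    assume "Cv \<inter> New \<noteq> {}"
    then obtain x m where xm: "x \<in> Cv" "m \<in> {1..a q}" "x = top(q := m)" unfolding New_def by blast
    have "x q = 0" using Cvq[OF xm(1)] .
    moreover have "x q = m" using xm(3) by simp
    ultimately show False using xm(2) by simp
  qed
  have injN: "inj_on (\<lambda>m. top(q := m)) {1..a q}"
  proof (rule inj_onI)
    fix m m' assume "top(q := m) = top(q := m')"
    hence "(top(q := m)) q = (top(q := m')) q" by simp
    thus "m = m'" by simp
  qed
  have cardN: "card New = a q" unfolding New_def using card_image[OF injN] by simp
  show ?case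
  proof (intro exI[of _ "Cv \<union> New"] conjI)
    show "finite (Cv \<union> New)" using Cv(1) unfolding New_def by simp
    show "Cv \<union> New \<noteq> {}" using Cv(2) by simp
    show "Cv \<union> New \<subseteq> {\<gamma>. (\<forall>p. p \<notin> insert q A \<longrightarrow> \<gamma> p = 0) \<and> (\<forall>p\<in>insert q A. \<gamma> p \<le> a p)}"
    proof
      fix x assume "x \<in> Cv \<union> New"
      thus "x \<in> {\<gamma>. (\<forall>p. p \<notin> insert q A \<longrightarrow> \<gamma> p = 0) \<and> (\<forall>p\<in>insert q A. \<gamma> p \<le> a p)}"
      proof
        assume x: "x \<in> Cv"
        show ?thesis using Cv(3) x Cvq[OF x] by auto
      next
        assume "x \<in> New"
        then obtain m where m: "m \<in> {1..a q}" "x = top(q := m)" unfolding New_def by blast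
        show ?thesis using m insert(2) unfolding top_def by auto
      qed
    qed
    show "\<forall>x\<in>Cv \<union> New. \<forall>y\<in>Cv \<union> New. x \<le> y \<or> y \<le> x"
    proof (intro ballI)
      fix x y assume x: "x \<in> Cv \<union> New" and y: "y \<in> Cv \<union> New"
      have below: "\<And>u v. u \<in> Cv \<Longrightarrow> v \<in> New \<Longrightarrow> u \<le> v"
      proof -
        fix u v assume u: "u \<in> Cv" and v: "v \<in> New"
        then obtain m where m: "v = top(q := m)" unfolding New_def by blast
        show "u \<le> v" unfolding le_fun_def m using Cvb[OF u] Cvq[OF u] by auto
      qed
      show "x \<le> y \<or> y \<le> x"
      proof (cases "x \<in> Cv")
        case xC: True
        show ?thesis
        proof (cases "y \<in> Cv")
          case True thus ?thesis using Cv(4) xC by blast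
        next
          case False hence "y \<in> New" using y by blast
          thus ?thesis using below[OF xC] by blast
        qed
      next
        case xN: False
        hence xN': "x \<in> New" using x by blast
        show ?thesis
        proof (cases "y \<in> Cv")
          case True thus ?thesis using below[OF True xN'] by blast
        next
          case False hence yN: "y \<in> New" using y by blast
          obtain m where m: "x = top(q := m)" using xN' unfolding New_def by blast
          obtain m' where m': "y = top(q := m')" using yN unfolding New_def by blast
          show ?thesis
          proof (cases "m \<le> m'")
            case True hence "x \<le> y" unfolding m m' le_fun_def by auto
            thus ?thesis by simp
          next
            case False hence "y \<le> x" unfolding m m' le_fun_def by auto
            thus ?thesis by simp
          qed
        qed
      qed
    qed
    have "card (Cv \<union> New) = card Cv + card New"
      using card_Un_disjoint[OF Cv(1) _ disj] unfolding New_def by simp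
    thus "card (Cv \<union> New) = (\<Sum>p\<in>insert q A. a p) + 1" using Cv(5) cardN insert(1,2) by simp
  qed
qed

context cyc
begin

lemma chain_card_le:
  assumes C: "C \<subseteq> IF" "finite C" and ch: "\<forall>A\<in>C. \<forall>B\<in>C. A \<subseteq> B \<or> B \<subseteq> A"
  shows "card C \<le> (\<Sum>p\<in>PP. al p) + 1"
proof -
  define h where "h = (\<lambda>T. \<Sum>p\<in>PP. vec T p)"
  have inj: "inj_on h C"
  proof (rule inj_onI)
    fix T U assume T: "T \<in> C" and U: "U \<in> C" and e: "h T = h U"
    have TI: "T \<in> IF" and UI: "U \<in> IF" using T U C by auto
    have aux: "T = U" if TU: "T \<subseteq> U" "h T = h U" "T \<in> IF" "U \<in> IF" for T U
    proof -
      have le: "vec T \<le> vec U" using sub_iff[OF that(3,4)] TU(1) by simp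
      have "\<And>p. p \<in> PP \<Longrightarrow> vec T p = vec U p"
      proof -
        fix p assume p: "p \<in> PP"
        show "vec T p = vec U p"
          by (rule sum_mono_inv[OF TU(2)[unfolded h_def] _ p fPP]) (rule le_funD[OF le])
      qed
      thus "T = U" using vec_ext[OF that(3,4)] by blast
    qed
    show "T = U"
    proof (cases "T \<subseteq> U")
      case True thus ?thesis using aux[OF True e TI UI] by blast
    next
      case False hence "U \<subseteq> T" using ch T U by blast
      thus ?thesis using aux[OF _ e[symmetric] UI TI] by simp
    qed
  qed
  have "h ` C \<subseteq> {..(\<Sum>p\<in>PP. al p)}"
  proof
    fix x assume "x \<in> h ` C"
    then obtain T where T: "T \<in> C" "x = h T" by blast
    have "h T \<le> (\<Sum>p\<in>PP. al p)" unfolding h_def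
      using T C vec_le_al by (intro sum_mono) blast
    thus "x \<in> {..(\<Sum>p\<in>PP. al p)}" using T by simp
  qed
  hence "card (h ` C) \<le> card {..(\<Sum>p\<in>PP. al p)}" by (intro card_mono) auto
  thus ?thesis using card_image[OF inj] by simp
qed

lemma lattice_length_eq: "lattice_length R k L = (\<Sum>p\<in>PP. al p)"
proof -
  define N where "N = (\<Sum>p\<in>PP. al p)"
  define XX where "XX = {card C - 1 | C. C \<subseteq> interm R k L \<and> finite C \<and> C \<noteq> {} \<and>
       (\<forall>A\<in>C. \<forall>B\<in>C. A \<subseteq> B \<or> B \<subseteq> A)}"
  obtain Cv where Cv: "finite Cv" "Cv \<noteq> {}"
    "Cv \<subseteq> {\<gamma>. (\<forall>p. p \<notin> PP \<longrightarrow> \<gamma> p = 0) \<and> (\<forall>p\<in>PP. \<gamma> p \<le> al p)}"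
    "\<forall>x\<in>Cv. \<forall>y\<in>Cv. x \<le> y \<or> y \<le> x" "card Cv = N + 1"
    using chain_exists[OF fPP, of al] unfolding N_def by blast
  have CvV: "Cv \<subseteq> VV" using Cv(3) unfolding VV_def by blast
  have injf: "inj_on fld Cv"
  proof (rule inj_onI)
    fix x y assume x: "x \<in> Cv" and y: "y \<in> Cv" and e: "fld x = fld y"
    have "x \<in> VV" "y \<in> VV" using x y CvV by (blast, blast)
    from fld_inj[OF this e] show "x = y" .
  qed
  have "card (fld ` Cv) - 1 \<in> XX"
    unfolding XX_def
  proof (intro CollectI exI conjI)
    show "fld ` Cv \<subseteq> interm R k L" unfolding interm_eq using fld_IF by blast
    show "finite (fld ` Cv)" using Cv(1) by simp
    show "fld ` Cv \<noteq> {}" using Cv(2) by simp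
    show "\<forall>A\<in>fld ` Cv. \<forall>B\<in>fld ` Cv. A \<subseteq> B \<or> B \<subseteq> A"
    proof (intro ballI)
      fix A B assume "A \<in> fld ` Cv" "B \<in> fld ` Cv"
      then obtain x y where xy: "x \<in> Cv" "y \<in> Cv" "A = fld x" "B = fld y" by blast
      have "x \<le> y \<or> y \<le> x" using Cv(4) xy by blast
      moreover have "x \<in> VV" "y \<in> VV" using xy CvV by (blast, blast)
      ultimately show "A \<subseteq> B \<or> B \<subseteq> A" using fld_mono[of x y] fld_mono[of y x] xy(3,4) by blast
    qed
  qed simp
  moreover have "card (fld ` Cv) - 1 = N" using card_image[OF injf] Cv(5) by simp
  ultimately have NX: "N \<in> XX" by simp
  have "\<And>x. x \<in> XX \<Longrightarrow> x \<le> N"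
  proof -
    fix x assume "x \<in> XX"
    then obtain C where C: "x = card C - 1" "C \<subseteq> IF" "finite C" "\<forall>A\<in>C. \<forall>B\<in>C. A \<subseteq> B \<or> B \<subseteq> A"
      unfolding XX_def interm_eq by blast
    show "x \<le> N" using chain_card_le[OF C(2,3,4)] C(1) unfolding N_def by simp
  qed
  hence "Sup XX = N" using NX by (intro cSup_eq_maximum) auto
  thus ?thesis unfolding lattice_length_def XX_def[symmetric] N_def .
qed

lemma ev1_V: "p \<in> PP \<Longrightarrow> ev p 1 \<in> VV" using ev_V al_pos by (simp add: Suc_leI)

lemma chain_iff:
  assumes kL': "k \<noteq> L" shows "is_chain_ext R k L \<longleftrightarrow> card PP = 1"
proof
  assume ch: "is_chain_ext R k L"
  show "card PP = 1"
  proof (rule ccontr)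
    assume "card PP \<noteq> 1"
    obtain p where p: "p \<in> PP" using PP_ne[OF kL'] by blast
    have "PP \<noteq> {p}" using \<open>card PP \<noteq> 1\<close> by auto
    then obtain q where q: "q \<in> PP" "q \<noteq> p" using p by blast
    have pq: "p \<in> PP" "q \<in> PP" "p \<noteq> q" using p q by auto
    have "fld (ev p 1) \<subseteq> fld (ev q 1) \<or> fld (ev q 1) \<subseteq> fld (ev p 1)"
      using ch fld_IF unfolding is_chain_ext_def interm_eq by blast
    hence "ev p 1 \<le> ev q 1 \<or> ev q 1 \<le> ev p 1" using fld_mono[OF ev1_V ev1_V] pq by simp
    moreover have "\<not> ev p 1 \<le> ev q 1"
    proof
      assume "ev p 1 \<le> ev q 1" hence "ev p 1 p \<le> ev q 1 p" by (rule le_funD)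
      thus False using pq unfolding ev_def by simp
    qed
    moreover have "\<not> ev q 1 \<le> ev p 1"
    proof
      assume "ev q 1 \<le> ev p 1" hence "ev q 1 q \<le> ev p 1 q" by (rule le_funD)
      thus False using pq unfolding ev_def by simp
    qed
    ultimately show False by blast
  qed
next
  assume "card PP = 1"
  then obtain p where p: "PP = {p}" using card_1_singletonE by blast
  show "is_chain_ext R k L" unfolding is_chain_ext_def interm_eq
  proof (intro ballI)
    fix A B assume A: "A \<in> IF" and B: "B \<in> IF"
    have oA: "\<And>q. q \<noteq> p \<Longrightarrow> vec A q = 0" using vec_out[OF A] p by simp
    have oB: "\<And>q. q \<noteq> p \<Longrightarrow> vec B q = 0" using vec_out[OF B] p by simp
    show "A \<subseteq> B \<or> B \<subseteq> A"
    proof (cases "vec A p \<le> vec B p")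
      case True
      have "vec A \<le> vec B"
      proof (unfold le_fun_def, intro allI)
        fix x show "vec A x \<le> vec B x" using True oA[of x] by (cases "x = p") auto
      qed
      thus ?thesis using sub_iff[OF A B] by simp
    next
      case False
      have "vec B \<le> vec A"
      proof (unfold le_fun_def, intro allI)
        fix x show "vec B x \<le> vec A x" using False oB[of x] by (cases "x = p") auto
      qed
      thus ?thesis using sub_iff[OF B A] by simp
    qed
  qed
qed

lemma Max_al_ge1: "k \<noteq> L \<Longrightarrow> 1 \<le> Max (al ` PP)"
proof -
  assume "k \<noteq> L"
  then obtain p where p: "p \<in> PP" using PP_ne by blast
  hence "al p \<le> Max (al ` PP)" by simp
  thus ?thesis using al_pos[OF p] by simp
qed

lemma boolean_iff:
  assumes kL': "k \<noteq> L" shows "is_boolean_ext R k L \<longleftrightarrow> Max (al ` PP) = 1"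
proof
  assume b: "is_boolean_ext R k L"
  show "Max (al ` PP) = 1"
  proof (rule ccontr)
    assume "Max (al ` PP) \<noteq> 1"
    moreover have "1 \<le> Max (al ` PP)" using Max_al_ge1[OF kL'] .
    ultimately have M2: "2 \<le> Max (al ` PP)" by linarith
    have "Max (al ` PP) \<in> al ` PP" using PP_ne[OF kL'] by (intro Max_in) auto
    then obtain p where p0: "p \<in> PP" "Max (al ` PP) = al p" by (rule imageE)
    hence p: "p \<in> PP" "al p = Max (al ` PP)" by simp_all
    have V: "fld (ev p 1) \<in> interm R k L" using fld_IF interm_eq by simp
    have b2: "\<forall>V\<in>interm R k L. \<exists>V'\<in>interm R k L. V \<inter> V' = k \<and> compositum R V V' = L"
      using b unfolding is_boolean_ext_def by (rule conjunct2)
    obtain V' where V': "V' \<in> interm R k L" "fld (ev p 1) \<inter> V' = k" "compositum R (fld (ev p 1)) V' = L"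
      using bspec[OF b2 V] by blast
    hence V'1: "V' \<in> IF" unfolding interm_eq by simp
    have "vec (fld (ev p 1) \<inter> V') p = 0" using V'(2) vec_k by simp
    hence "min 1 (vec V' p) = 0" using vec_inter[OF fld_IF V'1] vec_fld[OF ev1_V[OF p(1)]] unfolding ev_def by simp
    hence z: "vec V' p = 0" by simp
    have "vec (compositum R (fld (ev p 1)) V') p = al p" using V'(3) vec_L p by simp
    hence "max 1 (vec V' p) = al p" using vec_comp[OF fld_IF V'1] vec_fld[OF ev1_V[OF p(1)]] unfolding ev_def by simp
    thus False using z M2 p by simp
  qed
next
  assume M: "Max (al ` PP) = 1"
  show "is_boolean_ext R k L"
  proof (rule boolean_interval[OF k_IF L_IF])
    have "k \<subseteq> L" using k_IF by blast
    thus "vec k \<le> vec L" using sub_iff[OF k_IF L_IF] by blast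
    fix p show "vec L p \<le> vec k p + 1"
    proof (cases "p \<in> PP")
      case True hence "al p \<le> 1" using M al_le_Max[OF True] by simp
      thus ?thesis using True unfolding vec_L vec_k by simp
    next
      case False thus ?thesis unfolding vec_L vec_k by simp
    qed
  qed
qed

lemma P_iff:
  assumes kL': "k \<noteq> L" shows "is_P_ext R k L \<longleftrightarrow> (card PP = 1 \<or> Max (al ` PP) = 1)"
proof -
  define M where "M = Max (al ` PP)"
  have n: "loewy_length R k L = M" using loewy_length_eq[OF kL'] unfolding M_def .
  have M1: "1 \<le> M" using Max_al_ge1[OF kL'] unfolding M_def .
  have sub: "(\<Union>j<M. interm R (loewy R k L j) (loewy R k L (Suc j))) \<subseteq> IF"
    using interm_sub_IF[OF loewy_IF loewy_IF] by blast
  have mem: "\<And>T j. T \<in> IF \<Longrightarrow> T \<in> interm R (loewy R k L j) (loewy R k L (Suc j)) \<longleftrightarrow> bv j \<le> vec T \<and> vec T \<le> bv (Suc j)"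
  proof -
    fix T j assume T: "T \<in> IF"
    have "T \<in> interm R (loewy R k L j) (loewy R k L (Suc j)) \<longleftrightarrow> loewy R k L j \<subseteq> T \<and> T \<subseteq> loewy R k L (Suc j)"
      using T unfolding interm_def by blast
    also have "\<dots> \<longleftrightarrow> bv j \<le> vec T \<and> vec T \<le> bv (Suc j)"
      using sub_iff[OF loewy_IF T, of j] sub_iff[OF T loewy_IF, of "Suc j"] loewy_vec' by simp
    finally show "T \<in> interm R (loewy R k L j) (loewy R k L (Suc j)) \<longleftrightarrow> bv j \<le> vec T \<and> vec T \<le> bv (Suc j)" .
  qed
  have "is_P_ext R k L \<longleftrightarrow> (\<forall>T\<in>IF. \<exists>j<M. bv j \<le> vec T \<and> vec T \<le> bv (Suc j))"
  proof -
    have "is_P_ext R k L \<longleftrightarrow> IF = (\<Union>j<M. interm R (loewy R k L j) (loewy R k L (Suc j)))"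
      unfolding is_P_ext_def interm_eq n by simp
    also have "\<dots> \<longleftrightarrow> IF \<subseteq> (\<Union>j<M. interm R (loewy R k L j) (loewy R k L (Suc j)))" using sub by blast
    also have "\<dots> \<longleftrightarrow> (\<forall>T\<in>IF. \<exists>j<M. bv j \<le> vec T \<and> vec T \<le> bv (Suc j))"
    proof
      assume h: "IF \<subseteq> (\<Union>j<M. interm R (loewy R k L j) (loewy R k L (Suc j)))"
      show "\<forall>T\<in>IF. \<exists>j<M. bv j \<le> vec T \<and> vec T \<le> bv (Suc j)"
      proof
        fix T assume T: "T \<in> IF"
        then obtain j where "j < M" "T \<in> interm R (loewy R k L j) (loewy R k L (Suc j))" using h by blast
        thus "\<exists>j<M. bv j \<le> vec T \<and> vec T \<le> bv (Suc j)" using mem[OF T] by blast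
      qed
    next
      assume h: "\<forall>T\<in>IF. \<exists>j<M. bv j \<le> vec T \<and> vec T \<le> bv (Suc j)"
      show "IF \<subseteq> (\<Union>j<M. interm R (loewy R k L j) (loewy R k L (Suc j)))"
      proof
        fix T assume T: "T \<in> IF"
        then obtain j where "j < M" "bv j \<le> vec T \<and> vec T \<le> bv (Suc j)" using h by blast
        thus "T \<in> (\<Union>j<M. interm R (loewy R k L j) (loewy R k L (Suc j)))" using mem[OF T] by blast
      qed
    qed
    finally show ?thesis .
  qed
  also have "\<dots> \<longleftrightarrow> (card PP = 1 \<or> M = 1)"
  proof
    assume h: "\<forall>T\<in>IF. \<exists>j<M. bv j \<le> vec T \<and> vec T \<le> bv (Suc j)"
    show "card PP = 1 \<or> M = 1"
    proof (rule ccontr)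
      assume nn: "\<not> (card PP = 1 \<or> M = 1)"
      have "card PP \<noteq> 0" using PP_ne[OF kL'] fPP by simp
      have "Max (al ` PP) \<in> al ` PP" using PP_ne[OF kL'] by (intro Max_in) auto
      then obtain p0 where p00: "p0 \<in> PP" "Max (al ` PP) = al p0" by (rule imageE)
      hence p0: "p0 \<in> PP" "al p0 = M" unfolding M_def by simp_all
      have M2: "2 \<le> M" using nn M1 by simp
      obtain q where q: "q \<in> PP" "q \<noteq> p0"
      proof -
        have "card PP \<noteq> 1" using nn by simp
        hence "PP \<noteq> {p0}" by auto
        thus thesis using that p0(1) by blast
      qed
      have V: "ev p0 2 \<in> VV" using ev_V[OF p0(1)] p0 M2 by simp
      have "\<exists>j<M. bv j \<le> vec (fld (ev p0 2)) \<and> vec (fld (ev p0 2)) \<le> bv (Suc j)"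
        using h fld_IF[of "ev p0 2"] by blast
      then obtain j where j: "j < M" "bv j \<le> ev p0 2" "ev p0 2 \<le> bv (Suc j)"
        unfolding vec_fld[OF V] by blast
      have "bv j q \<le> ev p0 2 q" using j(2) by (rule le_funD)
      hence "bet j q = 0" using q unfolding bv_def ev_def by simp
      hence j0: "j = 0" using al_pos[OF q(1)] unfolding bet_def by (auto split: if_splits)
      have "ev p0 2 p0 \<le> bv (Suc j) p0" using j(3) by (rule le_funD)
      hence "2 \<le> bet 1 p0" using p0(1) j0 unfolding bv_def ev_def by simp
      thus False unfolding bet_def by (auto split: if_splits)
    qed
  next
    assume "card PP = 1 \<or> M = 1"
    thus "\<forall>T\<in>IF. \<exists>j<M. bv j \<le> vec T \<and> vec T \<le> bv (Suc j)"
    proof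
      assume "card PP = 1"
      then obtain p where p: "PP = {p}" using card_1_singletonE by blast
      have Mp: "M = al p" unfolding M_def p by simp
      show ?thesis
      proof
        fix T assume T: "T \<in> IF"
        define b where "b = vec T p"
        have bl: "b \<le> al p" using vec_le_al[OF T] unfolding b_def .
        define j where "j = b - 1"
        have jM: "j < M" using M1 bl Mp unfolding j_def by simp
        have "bv j \<le> vec T"
        proof (unfold le_fun_def, intro allI)
          fix x show "bv j x \<le> vec T x"
          proof (cases "x = p")
            case True thus ?thesis unfolding bv_def bet_def j_def b_def using p by auto
          next
            case False thus ?thesis unfolding bv_def using p by simp
          qed
        qed
        moreover have "vec T \<le> bv (Suc j)"
        proof (unfold le_fun_def, intro allI)
          fix x show "vec T x \<le> bv (Suc j) x"
          proof (cases "x = p")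
            case True thus ?thesis unfolding bv_def bet_def j_def using p bl b_def by auto
          next
            case False thus ?thesis using vec_out[OF T] p by simp
          qed
        qed
        ultimately show "\<exists>j<M. bv j \<le> vec T \<and> vec T \<le> bv (Suc j)" using jM by blast
      qed
    next
      assume M1': "M = 1"
      show ?thesis
      proof
        fix T assume T: "T \<in> IF"
        have "bv 0 \<le> vec T" unfolding bv_def bet_def le_fun_def by simp
        moreover have "vec T \<le> bv (Suc 0)"
        proof (unfold le_fun_def, intro allI)
          fix x show "vec T x \<le> bv (Suc 0) x"
          proof (cases "x \<in> PP")
            case True
            have "al x \<le> 1" using al_le_Max[OF True] M1' unfolding M_def by simp
            thus ?thesis using True vec_le_al[OF T, of x] unfolding bv_def bet_def by auto
          next
            case False thus ?thesis using vec_out[OF T] by simp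
          qed
        qed
        ultimately show "\<exists>j<M. bv j \<le> vec T \<and> vec T \<le> bv (Suc j)" using M1' by auto
      qed
    qed
  qed
  finally show ?thesis unfolding M_def .
qed

end


lemma rho_pow_fix: "\<rho> x = x \<Longrightarrow> (\<rho> ^^ n) x = x"
  by (induct n) auto

lemma cyc_from_cyclic:
  assumes F: "field R" and C: "cyclic_ext R k L"
  shows "\<exists>\<rho>. cyc R k L \<rho>"
proof -
  have G: "galois_ext R k L" using C unfolding cyclic_ext_def by simp
  have k: "subfield k R" and L: "subfield L R" and kL: "k \<subseteq> L"
    and fd: "ring.finite_dimension R k L" and fixG: "{x\<in>L. \<forall>\<sigma>\<in>Gal R k L. \<sigma> x = x} = k"
    using G unfolding galois_ext_def by auto
  obtain \<sigma> where s: "\<sigma> \<in> Gal R k L" and gen: "\<forall>\<tau>\<in>Gal R k L. \<exists>n. \<forall>x\<in>L. \<tau> x = (\<sigma> ^^ n) x"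
    using C unfolding cyclic_ext_def by blast
  have iso: "\<sigma> \<in> ring_iso (R\<lparr>carrier := L\<rparr>) (R\<lparr>carrier := L\<rparr>)" and sk: "\<And>x. x \<in> k \<Longrightarrow> \<sigma> x = x"
    using s unfolding Gal_def by auto
  have hom: "\<sigma> \<in> ring_hom (R\<lparr>carrier := L\<rparr>) (R\<lparr>carrier := L\<rparr>)" using iso unfolding ring_iso_def by simp
  have Lh: "Lhom R L \<sigma>"
    unfolding Lhom_def
  proof (intro conjI ballI)
    fix x assume "x \<in> L" thus "\<sigma> x \<in> L" using ring_hom_memE(1)[OF hom] by simp
  next
    fix x y assume "x \<in> L" "y \<in> L"
    thus "\<sigma> (x \<oplus>\<^bsub>R\<^esub> y) = \<sigma> x \<oplus>\<^bsub>R\<^esub> \<sigma> y" using ring_hom_memE(3)[OF hom] by simp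
  next
    fix x y assume "x \<in> L" "y \<in> L"
    thus "\<sigma> (x \<otimes>\<^bsub>R\<^esub> y) = \<sigma> x \<otimes>\<^bsub>R\<^esub> \<sigma> y" using ring_hom_memE(2)[OF hom] by simp
  next
    show "\<sigma> \<one>\<^bsub>R\<^esub> = \<one>\<^bsub>R\<^esub>" using ring_hom_memE(4)[OF hom] by simp
  qed
  have fixk: "{x \<in> L. \<sigma> x = x} = k"
  proof
    show "k \<subseteq> {x \<in> L. \<sigma> x = x}" using kL sk by auto
    show "{x \<in> L. \<sigma> x = x} \<subseteq> k"
    proof
      fix x assume x: "x \<in> {x \<in> L. \<sigma> x = x}"
      have "\<forall>\<tau>\<in>Gal R k L. \<tau> x = x"
      proof
        fix \<tau> assume "\<tau> \<in> Gal R k L"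
        then obtain n where "\<forall>y\<in>L. \<tau> y = (\<sigma> ^^ n) y" using gen by blast
        thus "\<tau> x = x" using x rho_pow_fix[of \<sigma> x n] by auto
      qed
      thus "x \<in> k" using x fixG by auto
    qed
  qed
  have "cyc R k L \<sigma>"
    unfolding cyc_def cyc_axioms_def using F k L kL fd Lh sk fixk by blast
  thus ?thesis by blast
qed

theorem theorem8p131:
  fixes R :: "('a, 'b) ring_scheme" and k L :: "'a set" and r n \<alpha> :: nat
    and P :: "nat set" and \<alpha>e :: "nat \<Rightarrow> nat" and A :: "nat \<Rightarrow> 'a set"
    and S :: "nat \<Rightarrow> 'a set" and \<beta> :: "nat \<Rightarrow> nat \<Rightarrow> nat"
  assumes "field R"
    and "cyclic_ext R k L"
    and "k \<subset> L"
    and "r = ring.dim R k L"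
    and "P = prime_factors r"
    and "\<alpha>e = (\<lambda>p. multiplicity p r)"
    and "A = (\<lambda>p. THE A. A \<in> atoms R k L \<and> ring.dim R k A = p)"
    and "\<alpha> = Max (\<alpha>e ` P)"
    and "S = loewy R k L"
    and "n = loewy_length R k L"
    and "\<beta> = (\<lambda>j p. if \<alpha>e p < j then \<alpha>e p else j)"
  shows
    \<comment> \<open>(1)\<close>
    "(\<forall>p\<in>P. \<exists>!A. A \<in> atoms R k L \<and> ring.dim R k A = p) \<and>
     (\<forall>T\<in>interm R k L. T \<in> atoms R k L \<longleftrightarrow> (\<exists>p\<in>P. ring.dim R k T = p))
    \<comment> \<open>(2)\<close>
   \<and> socle R k L = generate_field R (\<Union>p\<in>P. A p)
    \<comment> \<open>(3)\<close>
   \<and> (\<forall>j\<le>n. ring.dim R k (S j) = (\<Prod>p\<in>P. p ^ \<beta> j p))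
   \<and> (\<forall>j<n. \<forall>T\<in>interm R k L. T \<in> atoms R (S j) (S (Suc j)) \<longleftrightarrow>
        (\<exists>\<gamma>. ring.dim R k T = (\<Prod>p\<in>P. p ^ \<gamma> p) \<and>
           (\<exists>p0\<in>P. \<beta> j p0 < \<alpha>e p0 \<and> \<gamma> p0 = \<beta> j p0 + 1 \<and> (\<forall>p\<in>P - {p0}. \<gamma> p = \<beta> j p))))
   \<and> \<alpha> = n
    \<comment> \<open>(4)\<close>
   \<and> (\<forall>j<n. is_boolean_ext R (S j) (S (Suc j)))
    \<comment> \<open>(5)\<close>
   \<and> (\<forall>T\<in>interm R k L. T \<noteq> k \<longrightarrow>
        (Pi_irreducible R k L T \<longleftrightarrow> (\<exists>p\<in>P. \<exists>b\<in>{1..\<alpha>e p}. ring.dim R k T = p ^ b)))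
    \<comment> \<open>(6)\<close>
   \<and> finite (interm R k L)
   \<and> card (interm R k L) = card {d. d dvd r}
   \<and> card {d. d dvd r} = (\<Prod>p\<in>P. \<alpha>e p + 1)
   \<and> lattice_length R k L = (\<Sum>j<\<alpha>. card (atoms R (S j) (S (Suc j))))
   \<and> (\<Sum>j<\<alpha>. card (atoms R (S j) (S (Suc j)))) = (\<Sum>p\<in>P. \<alpha>e p)
   \<and> (\<Sum>p\<in>P. \<alpha>e p) = card {T. Pi_irreducible R k L T \<and> T \<noteq> k}
    \<comment> \<open>(7)\<close>
   \<and> (is_P_ext R k L \<longleftrightarrow> (is_boolean_ext R k L \<or> is_chain_ext R k L))
   \<and> ((is_boolean_ext R k L \<or> is_chain_ext R k L) \<longleftrightarrow> (card P = 1 \<or> \<alpha> = 1))"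
proof -
  obtain \<rho> where cy: "cyc R k L \<rho>" using cyc_from_cyclic[OF assms(1,2)] by blast
  interpret cyc R k L \<rho> by (rule cy)
  have kL': "k \<noteq> L" using assms(3) by blast
  have rr: "r = dd" using assms(4) by simp
  have PPe: "P = PP" using assms(5) rr by simp
  have ale: "\<alpha>e = al" using assms(6) rr by simp
  have Ae: "A = (\<lambda>p. THE A. A \<in> atoms R k L \<and> dim k A = p)" using assms(7) by simp
  have ae: "\<alpha> = Max (al ` PP)" using assms(8) PPe ale by simp
  have Se: "S = loewy R k L" using assms(9) .
  have ne: "n = Max (al ` PP)" using assms(10) loewy_length_eq[OF kL'] by simp
  have be: "\<beta> = bet" using assms(11) ale unfolding bet_def by (simp add: fun_eq_iff)
  have c1: "\<forall>p\<in>P. \<exists>!A. A \<in> atoms R k L \<and> dim k A = p" using atom_unique PPe by simp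
  have c2: "\<forall>T\<in>interm R k L. T \<in> atoms R k L \<longleftrightarrow> (\<exists>p\<in>P. dim k T = p)"
    using atom_deg_iff PPe interm_eq by simp
  have c3: "socle R k L = generate_field R (\<Union>p\<in>P. A p)" using socle_k[OF kL'] PPe Ae by simp
  have c4: "\<forall>j\<le>n. dim k (S j) = (\<Prod>p\<in>P. p ^ \<beta> j p)" using loewy_dim PPe Se be by simp
  have c5: "\<forall>j<n. \<forall>T\<in>interm R k L. T \<in> atoms R (S j) (S (Suc j)) \<longleftrightarrow>
        (\<exists>\<gamma>. dim k T = (\<Prod>p\<in>P. p ^ \<gamma> p) \<and>
           (\<exists>p0\<in>P. \<beta> j p0 < \<alpha>e p0 \<and> \<gamma> p0 = \<beta> j p0 + 1 \<and> (\<forall>p\<in>P - {p0}. \<gamma> p = \<beta> j p)))"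
    using atoms_step_stmt PPe Se be ale interm_eq by simp
  have c6: "\<alpha> = n" using ae ne by simp
  have c7: "\<forall>j<n. is_boolean_ext R (S j) (S (Suc j))" using boolean_step Se by simp
  have c8: "\<forall>T\<in>interm R k L. T \<noteq> k \<longrightarrow>
        (Pi_irreducible R k L T \<longleftrightarrow> (\<exists>p\<in>P. \<exists>b\<in>{1..\<alpha>e p}. dim k T = p ^ b))"
    using pi_irr_iff PPe ale interm_eq by simp
  have c9: "finite (interm R k L)" using finite_IF interm_eq by simp
  have c10: "card (interm R k L) = card {d. d dvd r}" using card_IF interm_eq rr by simp
  have c11: "card {d. d dvd r} = (\<Prod>p\<in>P. \<alpha>e p + 1)" using card_divs rr PPe ale by simp
  have c13: "(\<Sum>j<\<alpha>. card (atoms R (S j) (S (Suc j)))) = (\<Sum>p\<in>P. \<alpha>e p)"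
    using sum_atoms ae Se PPe ale by simp
  have c12: "lattice_length R k L = (\<Sum>j<\<alpha>. card (atoms R (S j) (S (Suc j))))"
    using lattice_length_eq c13 PPe ale by simp
  have c14: "(\<Sum>p\<in>P. \<alpha>e p) = card {T. Pi_irreducible R k L T \<and> T \<noteq> k}"
    using card_pi_irr PPe ale by simp
  have c15: "is_P_ext R k L \<longleftrightarrow> (is_boolean_ext R k L \<or> is_chain_ext R k L)"
    unfolding P_iff[OF kL'] boolean_iff[OF kL'] chain_iff[OF kL'] by blast
  have c16: "(is_boolean_ext R k L \<or> is_chain_ext R k L) \<longleftrightarrow> (card P = 1 \<or> \<alpha> = 1)"
    unfolding PPe ae boolean_iff[OF kL'] chain_iff[OF kL'] by blast
  show ?thesis using c1 c2 c3 c4 c5 c6 c7 c8 c9 c10 c11 c12 c13 c14 c15 c16 by blast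
qed


end
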